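(* Let $f\in\mathbb{C}[h]$. If $f(h)=wh+(1-w)c$ for some $c\in\mathbb{C}$ and some primitive $l$-th root of unity $w$ ($l\in\mathbb{N}$), then the center of $\mathcal{H}(f)$ is the subalgebra $\mathbb{C}[x^l,y^l,(h-c)^l,z]$ generated by $x^l,y^l,(h-c)^l,z$. Otherwise, the center of $\mathcal{H}(f)$ is $\mathbb{C}[z]$.
   Context: For $f(h)\in\mathbb{C}[h]$, $\mathcal{H}(f)$ is the unital associative $\mathbb{C}$-algebra generated by $x,y,h$ with relations $hx=xf(h)$, $yh=f(h)y$, $yx-xy=f(h)-h$. The element $z:=xy-h=yx-f(h)$ is central in $\mathcal{H}(f)$. *)

theory Defs
  imports Complex_Main "HOL-Computational_Algebra.Polynomial"
begin

text \<open>The algebra H(f) is presented by generators and relations: its elements are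
  formal expressions in the generators x, y, h and complex scalars, and equality in
  H(f) is the least congruence containing the axioms of a unital associative
  C-algebra together with the defining relations of H(f).\<close>

datatype gen = GX | GY | GH

datatype fexpr = Gen gen | Sc complex | Pl fexpr fexpr | Tm fexpr fexpr

abbreviation "ex \<equiv> Gen GX"
abbreviation "ey \<equiv> Gen GY"
abbreviation "eh \<equiv> Gen GH"

definition Ng :: "fexpr \<Rightarrow> fexpr" where
  "Ng e = Tm (Sc (-1)) e"

definition Mn :: "fexpr \<Rightarrow> fexpr \<Rightarrow> fexpr" where
  "Mn a b = Pl a (Ng b)"

fun epow :: "fexpr \<Rightarrow> nat \<Rightarrow> fexpr" where
  "epow e 0 = Sc 1"
| "epow e (Suc n) = Tm e (epow e n)"

definition peval :: "complex poly \<Rightarrow> fexpr \<Rightarrow> fexpr" where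
  "peval p e = foldr (\<lambda>i acc. Pl (Tm (Sc (coeff p i)) (epow e i)) acc) [0..<Suc (degree p)] (Sc 0)"

inductive Heq :: "complex poly \<Rightarrow> fexpr \<Rightarrow> fexpr \<Rightarrow> bool" for f where
  refl: "Heq f a a"
| sym: "Heq f a b \<Longrightarrow> Heq f b a"
| trans: "Heq f a b \<Longrightarrow> Heq f b c \<Longrightarrow> Heq f a c"
| cong_Pl: "Heq f a a' \<Longrightarrow> Heq f b b' \<Longrightarrow> Heq f (Pl a b) (Pl a' b')"
| cong_Tm: "Heq f a a' \<Longrightarrow> Heq f b b' \<Longrightarrow> Heq f (Tm a b) (Tm a' b')"
| add_assoc: "Heq f (Pl (Pl a b) c) (Pl a (Pl b c))"
| add_comm: "Heq f (Pl a b) (Pl b a)"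
| add_zero: "Heq f (Pl (Sc 0) a) a"
| add_neg: "Heq f (Pl a (Ng a)) (Sc 0)"
| mul_assoc: "Heq f (Tm (Tm a b) c) (Tm a (Tm b c))"
| mul_one_l: "Heq f (Tm (Sc 1) a) a"
| mul_one_r: "Heq f (Tm a (Sc 1)) a"
| distrib_l: "Heq f (Tm a (Pl b c)) (Pl (Tm a b) (Tm a c))"
| distrib_r: "Heq f (Tm (Pl a b) c) (Pl (Tm a c) (Tm b c))"
| sc_add: "Heq f (Pl (Sc s) (Sc t)) (Sc (s + t))"
| sc_mul: "Heq f (Tm (Sc s) (Sc t)) (Sc (s * t))"
| sc_central: "Heq f (Tm (Sc s) a) (Tm a (Sc s))"
| rel_hx: "Heq f (Tm eh ex) (Tm ex (peval f eh))"
| rel_yh: "Heq f (Tm ey eh) (Tm (peval f eh) ey)"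
| rel_comm: "Heq f (Mn (Tm ey ex) (Tm ex ey)) (Mn (peval f eh) eh)"

definition ez :: fexpr where
  "ez = Mn (Tm ex ey) eh"

text \<open>The center of H(f), as a (congruence-closed) set of representatives.\<close>
definition center_H :: "complex poly \<Rightarrow> fexpr set" where
  "center_H f = {e. \<forall>b. Heq f (Tm e b) (Tm b e)}"

inductive_set subalg_expr :: "fexpr set \<Rightarrow> fexpr set" for S where
  base: "s \<in> S \<Longrightarrow> s \<in> subalg_expr S"
| scal: "Sc c \<in> subalg_expr S"
| plus: "a \<in> subalg_expr S \<Longrightarrow> b \<in> subalg_expr S \<Longrightarrow> Pl a b \<in> subalg_expr S"
| times: "a \<in> subalg_expr S \<Longrightarrow> b \<in> subalg_expr S \<Longrightarrow> Tm a b \<in> subalg_expr S"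

definition gen_subalg :: "complex poly \<Rightarrow> fexpr set \<Rightarrow> fexpr set" where
  "gen_subalg f S = {e. \<exists>p\<in>subalg_expr S. Heq f e p}"

definition primitive_root :: "complex \<Rightarrow> nat \<Rightarrow> bool" where
  "primitive_root w l \<longleftrightarrow> 0 < l \<and> w ^ l = 1 \<and> (\<forall>k. 0 < k \<and> k < l \<longrightarrow> w ^ k \<noteq> 1)"

end

theory Submission
  imports Defs "HOL-Library.Function_Algebras"
begin


type_synonym V = "nat \<Rightarrow> nat \<Rightarrow> complex poly"

definition vsc :: "complex \<Rightarrow> V \<Rightarrow> V" where
  "vsc c v = (\<lambda>a b. smult c (v a b))"

definition islin :: "(V \<Rightarrow> V) \<Rightarrow> bool" where
  "islin A \<longleftrightarrow> (\<forall>u v. A (u + v) = A u + A v) \<and> (\<forall>c v. A (vsc c v) = vsc c (A v))"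

typedef lop = "{A. islin A}"
  morphisms app Abs_lop
  by (rule exI[of _ id]) (simp add: islin_def)

setup_lifting type_definition_lop

lemma islin_add: "islin A \<Longrightarrow> A (u + v) = A u + A v" by (simp add: islin_def)
lemma islin_sc: "islin A \<Longrightarrow> A (vsc c v) = vsc c (A v)" by (simp add: islin_def)
lemma islin_zero: "islin A \<Longrightarrow> A 0 = 0"
  using islin_add[of A 0 0] by simp
lemma islin_neg: "islin A \<Longrightarrow> A (- v) = - A v"
  using islin_add[of A v "-v"] islin_zero[of A] by (metis add.commute eq_neg_iff_add_eq_0 add.right_inverse)

lemma vsc_simps: "vsc c (u + v) = vsc c u + vsc c v" "vsc c (vsc d v) = vsc (c*d) v"
  "vsc (c + d) v = vsc c v + vsc d v"
  by (auto simp: vsc_def fun_eq_iff smult_add_right smult_add_left)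

instantiation lop :: ring_1
begin
lift_definition zero_lop :: lop is "\<lambda>v. 0" by (simp add: islin_def vsc_def fun_eq_iff)
lift_definition one_lop :: lop is "\<lambda>v. v" by (simp add: islin_def)
lift_definition plus_lop :: "lop \<Rightarrow> lop \<Rightarrow> lop" is "\<lambda>A B v. A v + B v"
  by (simp add: islin_def vsc_simps add_ac)
lift_definition uminus_lop :: "lop \<Rightarrow> lop" is "\<lambda>A v. - A v"
  by (simp add: islin_def vsc_def fun_eq_iff)
lift_definition minus_lop :: "lop \<Rightarrow> lop \<Rightarrow> lop" is "\<lambda>A B v. A v - B v"
  by (simp add: islin_def vsc_def fun_eq_iff smult_diff_right)
lift_definition times_lop :: "lop \<Rightarrow> lop \<Rightarrow> lop" is "\<lambda>A B v. A (B v)"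
  by (simp add: islin_def)
instance
proof
  fix a b c :: lop
  show "a * b * c = a * (b * c)" by transfer simp
  show "1 * a = a" by transfer simp
  show "a * 1 = a" by transfer simp
  show "(a + b) * c = a * c + b * c" by transfer simp
  show "a * (b + c) = a * b + a * c" by transfer (simp add: islin_add fun_eq_iff)
  show "a + b + c = a + (b + c)" by transfer (simp add: add_ac)
  show "a + b = b + a" by transfer (simp add: add_ac)
  show "0 + a = a" by transfer simp
  show "- a + a = 0" by transfer simp
  show "a - b = a + - b" by transfer simp
  show "(0::lop) \<noteq> 1"
  proof
    assume "(0::lop) = 1"
    then have "app 0 (\<lambda>a b. 1) = app 1 (\<lambda>a b. 1)" by simp
    then have "(0::V) = (\<lambda>a b. 1)" by (simp add: zero_lop.rep_eq one_lop.rep_eq)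
    then have "(0::complex poly) = 1" by (metis zero_fun_def)
    then show False by simp
  qed
qed
end

lemma app_plus[simp]: "app (A + B) v = app A v + app B v" by transfer simp
lemma app_times[simp]: "app (A * B) v = app A (app B v)" by transfer simp
lemma app_one[simp]: "app 1 v = v" by transfer simp
lemma app_zero[simp]: "app 0 v = 0" by transfer simp
lemma app_minus[simp]: "app (A - B) v = app A v - app B v" by transfer simp
lemma app_uminus[simp]: "app (- B) v = - app B v" by transfer simp
lemma app_lin: "islin (app A)" using app by auto
lemma app_add: "app A (u + v) = app A u + app A v" using app_lin islin_add by blast
lemma app_vsc: "app A (vsc c v) = vsc c (app A v)" using app_lin islin_sc by blast
lemma app_0v[simp]: "app A 0 = 0" using app_lin islin_zero by blast
lemma lop_eqI: "(\<And>v. app A v = app B v) \<Longrightarrow> A = B"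
  by (simp add: app_inject[symmetric] fun_eq_iff)

lift_definition sc :: "complex \<Rightarrow> lop" is vsc
  by (simp add: islin_def vsc_simps mult.commute)

lemma app_sc: "app (sc c) v = vsc c v" by transfer simp

lemma scl_add: "sc s + sc t = sc (s + t)" by transfer (simp add: vsc_simps fun_eq_iff)
lemma scl_mul: "sc s * sc t = sc (s * t)" by transfer (simp add: vsc_simps fun_eq_iff)
lemma sc_comm: "sc s * A = A * sc s" by (rule lop_eqI) (simp add: app_sc app_vsc)
lemma sc_one: "sc 1 = 1" by (rule lop_eqI) (simp add: app_sc vsc_def)
lemma sc_zero: "sc 0 = 0" by (rule lop_eqI) (simp add: app_sc vsc_def zero_fun_def)
lemma sc_m1: "sc (-1) * A = - A" by (rule lop_eqI) (simp add: app_sc vsc_def fun_eq_iff)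


fun fi :: "complex poly \<Rightarrow> nat \<Rightarrow> complex poly" where
  "fi f 0 = [:0, 1:]"
| "fi f (Suc n) = pcompose f (fi f n)"

lemma pcomp_X: "pcompose [:0,1:] (q::complex poly) = q"
  by (simp add: pcompose_pCons)

lemma fi_Suc': "fi f (Suc n) = pcompose (fi f n) f"
  by (induction n) (simp_all add: pcompose_assoc pcomp_X)

definition Xv :: "V \<Rightarrow> V" where
  "Xv v = (\<lambda>a b. if a = 0 then 0 else v (a - 1) b)"
definition Yv :: "complex poly \<Rightarrow> V \<Rightarrow> V" where
  "Yv f v = (\<lambda>a b. (if b = 0 then 0 else pcompose (v a (b - 1)) f) + (fi f (Suc a) - [:0,1:]) * v (Suc a) b)"
definition Pqv :: "complex poly \<Rightarrow> complex poly \<Rightarrow> V \<Rightarrow> V" where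
  "Pqv f q v = (\<lambda>a b. pcompose q (fi f a) * v a b)"

lift_definition XO :: lop is Xv
  by (auto simp: islin_def Xv_def vsc_def fun_eq_iff)
lift_definition YO :: "complex poly \<Rightarrow> lop" is Yv
  by (auto simp: islin_def Yv_def vsc_def fun_eq_iff pcompose_add pcompose_smult smult_add_right
      distrib_left simp del: mult_pCons_left mult_pCons_right)
lift_definition PQ :: "complex poly \<Rightarrow> complex poly \<Rightarrow> lop" is Pqv
  by (auto simp: islin_def Pqv_def vsc_def fun_eq_iff algebra_simps)

abbreviation HO :: "complex poly \<Rightarrow> lop" where "HO f \<equiv> PQ f [:0,1:]"

lemma app_XO: "app XO v = Xv v" by transfer simp
lemma app_YO: "app (YO f) v = Yv f v" by transfer simp
lemma app_PQ: "app (PQ f q) v = Pqv f q v" by transfer simp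

lemma PQ_add: "PQ f (p + q) = PQ f p + PQ f q"
  by (rule lop_eqI) (simp add: app_PQ Pqv_def pcompose_add fun_eq_iff algebra_simps)
lemma PQ_mult: "PQ f (p * q) = PQ f p * PQ f q"
  by (rule lop_eqI) (simp add: app_PQ Pqv_def pcompose_mult fun_eq_iff algebra_simps)
lemma PQ_const: "PQ f [:a:] = sc a"
  by (rule lop_eqI) (simp add: app_PQ Pqv_def app_sc vsc_def fun_eq_iff)
lemma PQ_0: "PQ f 0 = 0" using PQ_const[of f 0] by (simp add: sc_zero)
lemma PQ_1: "PQ f 1 = 1" using PQ_const[of f 1] by (simp add: sc_one one_pCons)
lemma PQ_neg: "PQ f (- p) = - PQ f p"
  using PQ_add[of f p "-p"] PQ_0[of f] by (simp add: eq_neg_iff_add_eq_0 add.commute)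
lemma PQ_diff: "PQ f (p - q) = PQ f p - PQ f q"
  using PQ_add[of f p "-q"] PQ_neg[of f q] by simp
lemma PQ_pow: "PQ f (p ^ n) = PQ f p ^ n"
  by (induction n) (simp_all add: PQ_1 PQ_mult)
lemma PQ_smult: "PQ f (smult c p) = sc c * PQ f p"
  proof -
  have "smult c p = [:c:] * p" by simp
  then show ?thesis by (simp only: PQ_mult PQ_const)
qed
lemma PQ_comm: "PQ f p * PQ f q = PQ f q * PQ f p"
  by (simp add: PQ_mult[symmetric] mult.commute)

lemma PQ_X: "PQ f q * XO = XO * PQ f (pcompose q f)"
proof (rule lop_eqI)
  fix v
  have e: "pcompose q (fi f a) = pcompose (pcompose q f) (fi f (a - 1))" if "a \<noteq> 0" for a
    using that by (cases a) (simp_all add: pcompose_assoc)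
  show "app (PQ f q * XO) v = app (XO * PQ f (pcompose q f)) v"
    by (simp add: app_PQ app_XO Pqv_def Xv_def fun_eq_iff e del: fi.simps(2))
qed

lemma Y_PQ: "YO f * PQ f q = PQ f (pcompose q f) * YO f"
proof (rule lop_eqI)
  fix v
  have e: "pcompose (pcompose q (fi f a)) f = pcompose (pcompose q f) (fi f a)" for a
    by (metis fi.simps(2) fi_Suc' pcompose_assoc)
  have e2: "pcompose q (fi f (Suc a)) = pcompose (pcompose q f) (fi f a)" for a
    by (simp add: pcompose_assoc)
  show "app (YO f * PQ f q) v = app (PQ f (pcompose q f) * YO f) v"
    by (simp add: app_PQ app_YO Pqv_def Yv_def fun_eq_iff pcompose_mult e e2 algebra_simps
        del: fi.simps(2))
qed

lemma Y_X: "YO f * XO = XO * YO f + PQ f (f - [:0,1:])"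
proof (rule lop_eqI)
  fix v
  have "Yv f (Xv v) a b = Xv (Yv f v) a b + Pqv f (f - [:0,1:]) v a b" for a b
    by (cases a; cases b) (simp_all add: Yv_def Xv_def Pqv_def pcompose_diff pcomp_X algebra_simps)
  then show "app (YO f * XO) v = app (XO * YO f + PQ f (f - [:0,1:])) v"
    by (simp add: app_PQ app_YO app_XO fun_eq_iff)
qed

lemma H_X: "HO f * XO = XO * PQ f f"
  using PQ_X[of f "[:0,1:]"] by (simp add: pcomp_X)
lemma Y_H: "YO f * HO f = PQ f f * YO f"
  using Y_PQ[of f "[:0,1:]"] by (simp add: pcomp_X)


fun L :: "complex poly \<Rightarrow> fexpr \<Rightarrow> lop" where
  "L f (Gen GX) = XO"
| "L f (Gen GY) = YO f"
| "L f (Gen GH) = HO f"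
| "L f (Sc c) = sc c"
| "L f (Pl a b) = L f a + L f b"
| "L f (Tm a b) = L f a * L f b"

lemma L_Ng[simp]: "L f (Ng a) = - L f a" by (simp add: Ng_def sc_m1)
lemma L_Mn[simp]: "L f (Mn a b) = L f a - L f b" by (simp add: Mn_def)
lemma L_epow[simp]: "L f (epow e n) = L f e ^ n" by (induction n) (simp_all add: sc_one)

lemma monom_X: "monom c i = smult c ([:0,1:]^i :: complex poly)"
  by (induction i) (simp_all add: monom_Suc monom_0)

lemma L_foldr: "L f (foldr (\<lambda>i acc. Pl (Tm (Sc (coeff p i)) (epow eh i)) acc) xs (Sc 0))
   = PQ f (\<Sum>i\<leftarrow>xs. monom (coeff p i) i)"
  by (induction xs) (simp_all add: sc_zero PQ_0 PQ_add monom_X PQ_smult PQ_pow)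

lemma L_peval: "L f (peval p eh) = PQ f p"
proof -
  have "(\<Sum>i\<leftarrow>[0..<Suc (degree p)]. monom (coeff p i) i) = p"
    by (simp only: sum_set_upt_conv_sum_list_nat[symmetric] set_upt atLeast0LessThan lessThan_Suc_atMost
        poly_as_sum_of_monoms)
  then show ?thesis by (simp only: peval_def L_foldr)
qed

lemma F1: "Heq f a b \<Longrightarrow> L f a = L f b"
proof (induction rule: Heq.induct)
  case (add_neg a) then show ?case by (simp add: sc_zero)
next
  case (sc_add s t) then show ?case by (simp add: scl_add)
next
  case (sc_mul s t) then show ?case by (simp add: scl_mul)
next
  case (sc_central s a) then show ?case by (simp add: sc_comm)
next
  case rel_hx then show ?case by (simp add: L_peval H_X)
next
  case rel_yh then show ?case by (simp add: L_peval Y_H)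
next
  case rel_comm then show ?case by (simp add: L_peval Y_X PQ_diff)
qed (simp_all add: algebra_simps sc_zero sc_one)


context fixes f :: "complex poly"
begin

abbreviation heq (infix "\<approx>" 50) where "a \<approx> b \<equiv> Heq f a b"

lemma hrefl[intro, simp]: "a \<approx> a" by (rule Heq.refl)
lemma hsym: "a \<approx> b \<Longrightarrow> b \<approx> a" by (rule Heq.sym)
lemma htrans[trans]: "a \<approx> b \<Longrightarrow> b \<approx> c \<Longrightarrow> a \<approx> c" by (rule Heq.trans)
lemma hPl: "a \<approx> a' \<Longrightarrow> b \<approx> b' \<Longrightarrow> Pl a b \<approx> Pl a' b'" by (rule Heq.cong_Pl)
lemma hTm: "a \<approx> a' \<Longrightarrow> b \<approx> b' \<Longrightarrow> Tm a b \<approx> Tm a' b'" by (rule Heq.cong_Tm)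
lemma hPl1: "a \<approx> a' \<Longrightarrow> Pl a b \<approx> Pl a' b" by (simp add: hPl)
lemma hPl2: "b \<approx> b' \<Longrightarrow> Pl a b \<approx> Pl a b'" by (simp add: hPl)
lemma hTm1: "a \<approx> a' \<Longrightarrow> Tm a b \<approx> Tm a' b" by (simp add: hTm)
lemma hTm2: "b \<approx> b' \<Longrightarrow> Tm a b \<approx> Tm a b'" by (simp add: hTm)

lemma hassoc: "Pl (Pl a b) c \<approx> Pl a (Pl b c)" by (rule Heq.add_assoc)
lemma hcomm: "Pl a b \<approx> Pl b a" by (rule Heq.add_comm)
lemma hzero: "Pl (Sc 0) a \<approx> a" by (rule Heq.add_zero)
lemma hzero_r: "Pl a (Sc 0) \<approx> a" using hcomm hzero htrans by blast
lemma hmassoc: "Tm (Tm a b) c \<approx> Tm a (Tm b c)" by (rule Heq.mul_assoc)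
lemma hdl: "Tm a (Pl b c) \<approx> Pl (Tm a b) (Tm a c)" by (rule Heq.distrib_l)
lemma hdr: "Tm (Pl a b) c \<approx> Pl (Tm a c) (Tm b c)" by (rule Heq.distrib_r)
lemma hone_l: "Tm (Sc 1) a \<approx> a" by (rule Heq.mul_one_l)
lemma hone_r: "Tm a (Sc 1) \<approx> a" by (rule Heq.mul_one_r)
lemma hsc_central: "Tm (Sc s) a \<approx> Tm a (Sc s)" by (rule Heq.sc_central)

lemma hPl4: "Pl (Pl a b) (Pl c d) \<approx> Pl (Pl a c) (Pl b d)"
proof -
  have "Pl (Pl a b) (Pl c d) \<approx> Pl a (Pl b (Pl c d))" by (rule hassoc)
  also have "\<dots> \<approx> Pl a (Pl (Pl b c) d)" by (rule hPl2, rule hsym, rule hassoc)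
  also have "\<dots> \<approx> Pl a (Pl (Pl c b) d)" by (rule hPl2, rule hPl1, rule hcomm)
  also have "\<dots> \<approx> Pl a (Pl c (Pl b d))" by (rule hPl2, rule hassoc)
  also have "\<dots> \<approx> Pl (Pl a c) (Pl b d)" by (rule hsym, rule hassoc)
  finally show ?thesis .
qed

lemma hTm0l: "Tm (Sc 0) a \<approx> Sc 0"
proof -
  let ?t = "Tm (Sc 0) a"
  have s00: "Pl (Sc 0) (Sc 0) \<approx> Sc 0" using Heq.sc_add[of f 0 0] by simp
  have tt: "?t \<approx> Pl ?t ?t"
  proof -
    have "?t \<approx> Tm (Pl (Sc 0) (Sc 0)) a" by (rule hTm1, rule hsym, rule s00)
    also have "\<dots> \<approx> Pl ?t ?t" by (rule hdr)
    finally show ?thesis .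
  qed
  have "Sc 0 \<approx> Pl ?t (Ng ?t)" by (rule hsym, rule Heq.add_neg)
  also have "\<dots> \<approx> Pl (Pl ?t ?t) (Ng ?t)" by (rule hPl1, rule tt)
  also have "\<dots> \<approx> Pl ?t (Pl ?t (Ng ?t))" by (rule hassoc)
  also have "\<dots> \<approx> Pl ?t (Sc 0)" by (rule hPl2, rule Heq.add_neg)
  also have "\<dots> \<approx> ?t" by (rule hzero_r)
  finally show ?thesis by (rule hsym)
qed

lemma hTm0r: "Tm a (Sc 0) \<approx> Sc 0"
  using hsc_central[of 0 a] hTm0l[of a] by (meson hsym htrans)

lemma hsc4: "Tm (Sc c) (Tm a b) \<approx> Tm a (Tm (Sc c) b)"
proof -
  have "Tm (Sc c) (Tm a b) \<approx> Tm (Tm a b) (Sc c)" by (rule hsc_central)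
  also have "\<dots> \<approx> Tm a (Tm b (Sc c))" by (rule hmassoc)
  also have "\<dots> \<approx> Tm a (Tm (Sc c) b)" by (rule hTm2, rule hsym, rule hsc_central)
  finally show ?thesis .
qed

lemma hsc_mul: "Tm (Sc s) (Tm (Sc t) a) \<approx> Tm (Sc (s*t)) a"
proof -
  have "Tm (Sc s) (Tm (Sc t) a) \<approx> Tm (Tm (Sc s) (Sc t)) a" by (rule hsym, rule hmassoc)
  also have "\<dots> \<approx> Tm (Sc (s*t)) a" by (rule hTm1, rule Heq.sc_mul)
  finally show ?thesis .
qed

lemma hsc_add: "Pl (Tm (Sc s) a) (Tm (Sc t) a) \<approx> Tm (Sc (s+t)) a"
proof -
  have "Pl (Tm (Sc s) a) (Tm (Sc t) a) \<approx> Tm (Pl (Sc s) (Sc t)) a" by (rule hsym, rule hdr)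
  also have "\<dots> \<approx> Tm (Sc (s+t)) a" by (rule hTm1, rule Heq.sc_add)
  finally show ?thesis .
qed

end


fun hor :: "complex list \<Rightarrow> fexpr" where
  "hor [] = Sc 0"
| "hor (a # as) = Pl (Sc a) (Tm eh (hor as))"

definition pev :: "complex poly \<Rightarrow> fexpr" where "pev p = hor (coeffs p)"

lemma pev_0[simp]: "pev 0 = Sc 0" by (simp add: pev_def)

context fixes f :: "complex poly"
begin

lemma pev_pCons: "Heq f (pev (pCons a p)) (Pl (Sc a) (Tm eh (pev p)))"
proof (cases "a = 0 \<and> p = 0")
  case True
  have "Heq f (Sc 0) (Tm eh (Sc 0))" by (rule hsym, rule hTm0r)
  also have "Heq f \<dots> (Pl (Sc 0) (Tm eh (Sc 0)))" by (rule hsym, rule hzero)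
  finally show ?thesis using True by (simp add: pev_def)
next
  case False
  then have "coeffs (pCons a p) = a # coeffs p" by (auto simp: cCons_def)
  then show ?thesis by (simp add: pev_def)
qed

lemma pev_add: "Heq f (Pl (pev p) (pev q)) (pev (p + q))"
proof (induction p arbitrary: q rule: pCons_induct)
  case 0
  then show ?case by (simp add: hzero)
next
  case (pCons a p)
  obtain b q' where q: "q = pCons b q'" by (rule pCons_cases)
  have "Heq f (Pl (pev (pCons a p)) (pev q)) (Pl (Pl (Sc a) (Tm eh (pev p))) (Pl (Sc b) (Tm eh (pev q'))))"
    unfolding q by (rule hPl; rule pev_pCons)
  also have "Heq f \<dots> (Pl (Pl (Sc a) (Sc b)) (Pl (Tm eh (pev p)) (Tm eh (pev q'))))" by (rule hPl4)
  also have "Heq f \<dots> (Pl (Sc (a + b)) (Tm eh (Pl (pev p) (pev q'))))"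
    by (rule hPl, rule Heq.sc_add, rule hsym, rule hdl)
  also have "Heq f \<dots> (Pl (Sc (a + b)) (Tm eh (pev (p + q'))))"
    by (rule hPl2, rule hTm2, rule pCons.IH)
  also have "Heq f \<dots> (pev (pCons a p + q))" unfolding q using hsym[OF pev_pCons[of "a+b" "p+q'"]] by simp
  finally show ?case .
qed

lemma pev_smult: "Heq f (Tm (Sc c) (pev p)) (pev (smult c p))"
proof (induction p rule: pCons_induct)
  case 0
  then show ?case by (simp add: hTm0r)
next
  case (pCons a p)
  have "Heq f (Tm (Sc c) (pev (pCons a p))) (Tm (Sc c) (Pl (Sc a) (Tm eh (pev p))))"
    by (rule hTm2, rule pev_pCons)
  also have "Heq f \<dots> (Pl (Tm (Sc c) (Sc a)) (Tm (Sc c) (Tm eh (pev p))))" by (rule hdl)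
  also have "Heq f \<dots> (Pl (Sc (c * a)) (Tm eh (Tm (Sc c) (pev p))))"
    by (rule hPl, rule Heq.sc_mul, rule hsc4)
  also have "Heq f \<dots> (Pl (Sc (c * a)) (Tm eh (pev (smult c p))))"
    by (rule hPl2, rule hTm2, rule pCons.IH)
  also have "Heq f \<dots> (pev (smult c (pCons a p)))" using hsym[OF pev_pCons[of "c*a" "smult c p"]] by simp
  finally show ?case .
qed

lemma pev_mult: "Heq f (Tm (pev p) (pev q)) (pev (p * q))"
proof (induction p rule: pCons_induct)
  case 0
  then show ?case by (simp add: hTm0l)
next
  case (pCons a p)
  have "Heq f (Tm (pev (pCons a p)) (pev q)) (Tm (Pl (Sc a) (Tm eh (pev p))) (pev q))"
    by (rule hTm1, rule pev_pCons)
  also have "Heq f \<dots> (Pl (Tm (Sc a) (pev q)) (Tm (Tm eh (pev p)) (pev q)))" by (rule hdr)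
  also have "Heq f \<dots> (Pl (pev (smult a q)) (Tm eh (Tm (pev p) (pev q))))"
    by (rule hPl, rule pev_smult, rule hmassoc)
  also have "Heq f \<dots> (Pl (pev (smult a q)) (Pl (Sc 0) (Tm eh (pev (p * q)))))"
    by (rule hPl2, rule hsym, rule htrans, rule hzero, rule hTm2, rule hsym, rule pCons.IH)
  also have "Heq f \<dots> (Pl (pev (smult a q)) (pev (pCons 0 (p * q))))"
    by (rule hPl2, rule hsym, rule pev_pCons)
  also have "Heq f \<dots> (pev (pCons a p * q))" by (simp add: pev_add)
  finally show ?case .
qed

lemma pev_const: "Heq f (pev [:c:]) (Sc c)"
proof -
  have "Heq f (pev [:c:]) (Pl (Sc c) (Tm eh (Sc 0)))" using pev_pCons[of c 0] by simp
  also have "Heq f \<dots> (Pl (Sc c) (Sc 0))" by (rule hPl2, rule hTm0r)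
  also have "Heq f \<dots> (Sc c)" by (rule hzero_r)
  finally show ?thesis .
qed

lemma pev_X: "Heq f (pev [:0,1:]) eh"
proof -
  have "Heq f (pev [:0,1:]) (Pl (Sc 0) (Tm eh (pev [:1:])))" by (rule pev_pCons)
  also have "Heq f \<dots> (Tm eh (pev [:1:]))" by (rule hzero)
  also have "Heq f \<dots> (Tm eh (Sc 1))" by (rule hTm2, rule pev_const)
  also have "Heq f \<dots> eh" by (rule hone_r)
  finally show ?thesis .
qed

lemma pev_diff: "Heq f (Mn (pev p) (pev q)) (pev (p - q))"
proof -
  have "Heq f (Mn (pev p) (pev q)) (Pl (pev p) (pev (smult (-1) q)))"
    unfolding Mn_def Ng_def by (rule hPl2, rule pev_smult)
  also have "Heq f \<dots> (pev (p + smult (-1) q))" by (rule pev_add)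
  finally show ?thesis by simp
qed

definition Tsum :: "complex poly \<Rightarrow> nat list \<Rightarrow> fexpr" where
  "Tsum p xs = foldr (\<lambda>i acc. Pl (Tm (Sc (coeff p i)) (epow eh i)) acc) xs (Sc 0)"

lemma T_zero: "Heq f (Tsum 0 xs) (Sc 0)"
proof (induction xs)
  case Nil
  then show ?case by (simp add: Tsum_def)
next
  case (Cons a xs)
  have "Heq f (Tsum 0 (a # xs)) (Pl (Tm (Sc 0) (epow eh a)) (Tsum 0 xs))" by (simp add: Tsum_def)
  also have "Heq f \<dots> (Pl (Sc 0) (Sc 0))" by (rule hPl, rule hTm0l, rule Cons.IH)
  also have "Heq f \<dots> (Sc 0)" by (rule hzero)
  finally show ?case .
qed

lemma T_shift: "Heq f (Tsum (pCons a p) (map Suc xs)) (Tm eh (Tsum p xs))"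
proof (induction xs)
  case Nil
  then show ?case using hsym[OF hTm0r[of f eh]] by (simp add: Tsum_def)
next
  case (Cons i xs)
  have "Heq f (Tsum (pCons a p) (map Suc (i # xs)))
     (Pl (Tm (Sc (coeff p i)) (Tm eh (epow eh i))) (Tsum (pCons a p) (map Suc xs)))"
    by (simp add: Tsum_def)
  also have "Heq f \<dots> (Pl (Tm eh (Tm (Sc (coeff p i)) (epow eh i))) (Tm eh (Tsum p xs)))"
    by (rule hPl, rule hsc4, rule Cons.IH)
  also have "Heq f \<dots> (Tm eh (Tsum p (i # xs)))" using hsym[OF hdl[of f eh "Tm (Sc (coeff p i)) (epow eh i)" "Tsum p xs"]] by (simp add: Tsum_def)
  finally show ?case .
qed

lemma T_pev: "degree p < n \<Longrightarrow> Heq f (Tsum p [0..<n]) (pev p)"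
proof (induction p arbitrary: n rule: pCons_induct)
  case 0
  then show ?case by (simp add: T_zero)
next
  case (pCons a p)
  obtain m where n: "n = Suc m" using pCons.prems by (cases n) auto
  have ups: "[0..<n] = 0 # map Suc [0..<m]" unfolding n
    by (simp add: upt_conv_Cons map_Suc_upt del: upt_Suc)
  have rec: "Heq f (Tsum p [0..<m]) (pev p)"
  proof (cases "p = 0")
    case True
    then show ?thesis by (simp add: T_zero)
  next
    case False
    then have "degree p < m" using pCons.prems n by simp
    then show ?thesis by (rule pCons.IH)
  qed
  have "Heq f (Tsum (pCons a p) [0..<n]) (Pl (Tm (Sc a) (Sc 1)) (Tsum (pCons a p) (map Suc [0..<m])))"
    unfolding ups by (simp add: Tsum_def)
  also have "Heq f \<dots> (Pl (Sc a) (Tm eh (pev p)))"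
    by (rule hPl, rule hone_r, rule htrans, rule T_shift, rule hTm2, rule rec)
  also have "Heq f \<dots> (pev (pCons a p))" by (rule hsym, rule pev_pCons)
  finally show ?case .
qed

lemma peval_pev: "Heq f (peval p eh) (pev p)"
  using T_pev[of p "Suc (degree p)"] by (simp add: Tsum_def peval_def)

lemma pev_ex: "Heq f (Tm (pev q) ex) (Tm ex (pev (pcompose q f)))"
proof (induction q rule: pCons_induct)
  case 0
  then show ?case by (simp, meson hTm0l hTm0r hsym htrans)
next
  case (pCons a q)
  have "Heq f (Tm (pev (pCons a q)) ex) (Tm (Pl (Sc a) (Tm eh (pev q))) ex)"
    by (rule hTm1, rule pev_pCons)
  also have "Heq f \<dots> (Pl (Tm (Sc a) ex) (Tm (Tm eh (pev q)) ex))" by (rule hdr)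
  also have "Heq f \<dots> (Pl (Tm ex (Sc a)) (Tm eh (Tm (pev q) ex)))"
    by (rule hPl, rule hsc_central, rule hmassoc)
  also have "Heq f \<dots> (Pl (Tm ex (Sc a)) (Tm eh (Tm ex (pev (pcompose q f)))))"
    by (rule hPl2, rule hTm2, rule pCons.IH)
  also have "Heq f \<dots> (Pl (Tm ex (Sc a)) (Tm (Tm eh ex) (pev (pcompose q f))))"
    by (rule hPl2, rule hsym, rule hmassoc)
  also have "Heq f \<dots> (Pl (Tm ex (Sc a)) (Tm (Tm ex (pev f)) (pev (pcompose q f))))"
    by (rule hPl2, rule hTm1, rule htrans, rule Heq.rel_hx, rule hTm2, rule peval_pev)
  also have "Heq f \<dots> (Pl (Tm ex (Sc a)) (Tm ex (Tm (pev f) (pev (pcompose q f)))))"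
    by (rule hPl2, rule hmassoc)
  also have "Heq f \<dots> (Tm ex (Pl (Sc a) (Tm (pev f) (pev (pcompose q f)))))"
    by (rule hsym, rule hdl)
  also have "Heq f \<dots> (Tm ex (pev (pcompose (pCons a q) f)))"
  proof (rule hTm2)
    have "Heq f (Pl (Sc a) (Tm (pev f) (pev (pcompose q f)))) (Pl (pev [:a:]) (pev (f * pcompose q f)))"
      by (rule hPl, rule hsym, rule pev_const, rule pev_mult)
    also have "Heq f \<dots> (pev (pcompose (pCons a q) f))" by (simp add: pcompose_pCons pev_add)
    finally show "Heq f (Pl (Sc a) (Tm (pev f) (pev (pcompose q f)))) (pev (pcompose (pCons a q) f))" .
  qed
  finally show ?case .
qed

lemma ey_pev: "Heq f (Tm ey (pev q)) (Tm (pev (pcompose q f)) ey)"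
proof (induction q rule: pCons_induct)
  case 0
  then show ?case by (simp, meson hTm0l hTm0r hsym htrans)
next
  case (pCons a q)
  have "Heq f (Tm ey (pev (pCons a q))) (Tm ey (Pl (Sc a) (Tm eh (pev q))))"
    by (rule hTm2, rule pev_pCons)
  also have "Heq f \<dots> (Pl (Tm ey (Sc a)) (Tm ey (Tm eh (pev q))))" by (rule hdl)
  also have "Heq f \<dots> (Pl (Tm (Sc a) ey) (Tm (Tm ey eh) (pev q)))"
    by (rule hPl, rule hsym, rule hsc_central, rule hsym, rule hmassoc)
  also have "Heq f \<dots> (Pl (Tm (Sc a) ey) (Tm (Tm (pev f) ey) (pev q)))"
    by (rule hPl2, rule hTm1, rule htrans, rule Heq.rel_yh, rule hTm1, rule peval_pev)
  also have "Heq f \<dots> (Pl (Tm (Sc a) ey) (Tm (pev f) (Tm ey (pev q))))"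
    by (rule hPl2, rule hmassoc)
  also have "Heq f \<dots> (Pl (Tm (Sc a) ey) (Tm (pev f) (Tm (pev (pcompose q f)) ey)))"
    by (rule hPl2, rule hTm2, rule pCons.IH)
  also have "Heq f \<dots> (Pl (Tm (Sc a) ey) (Tm (Tm (pev f) (pev (pcompose q f))) ey))"
    by (rule hPl2, rule hsym, rule hmassoc)
  also have "Heq f \<dots> (Tm (Pl (Sc a) (Tm (pev f) (pev (pcompose q f)))) ey)"
    by (rule hsym, rule hdr)
  also have "Heq f \<dots> (Tm (pev (pcompose (pCons a q) f)) ey)"
  proof (rule hTm1)
    have "Heq f (Pl (Sc a) (Tm (pev f) (pev (pcompose q f)))) (Pl (pev [:a:]) (pev (f * pcompose q f)))"
      by (rule hPl, rule hsym, rule pev_const, rule pev_mult)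
    also have "Heq f \<dots> (pev (pcompose (pCons a q) f))" by (simp add: pcompose_pCons pev_add)
    finally show "Heq f (Pl (Sc a) (Tm (pev f) (pev (pcompose q f)))) (pev (pcompose (pCons a q) f))" .
  qed
  finally show ?case .
qed

end


fun row :: "nat \<Rightarrow> (nat \<Rightarrow> complex poly) \<Rightarrow> fexpr" where
  "row 0 r = Sc 0"
| "row (Suc K) r = Pl (pev (r 0)) (Tm (row K (\<lambda>k. r (Suc k))) ey)"

fun nfx :: "nat \<Rightarrow> nat \<Rightarrow> V \<Rightarrow> fexpr" where
  "nfx K 0 v = Sc 0"
| "nfx K (Suc N) v = Pl (row K (v 0)) (Tm ex (nfx K N (\<lambda>a. v (Suc a))))"

definition bounded :: "nat \<Rightarrow> nat \<Rightarrow> V \<Rightarrow> bool" where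
  "bounded K N v \<longleftrightarrow> (\<forall>a b. N \<le> a \<or> K \<le> b \<longrightarrow> v a b = 0)"

context fixes f :: "complex poly"
begin

lemma hPl4': "Heq f (Pl a (Pl c (Pl b d))) (Pl (Pl a b) (Pl c d))"
proof -
  have "Heq f (Pl a (Pl c (Pl b d))) (Pl a (Pl (Pl c b) d))" by (rule hPl2, rule hsym, rule hassoc)
  also have "Heq f \<dots> (Pl a (Pl (Pl b c) d))" by (rule hPl2, rule hPl1, rule hcomm)
  also have "Heq f \<dots> (Pl a (Pl b (Pl c d)))" by (rule hPl2, rule hassoc)
  also have "Heq f \<dots> (Pl (Pl a b) (Pl c d))" by (rule hsym, rule hassoc)
  finally show ?thesis .
qed

lemma row_zero: "(\<forall>b. r b = 0) \<Longrightarrow> Heq f (row K r) (Sc 0)"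
proof (induction K arbitrary: r)
  case 0
  then show ?case by simp
next
  case (Suc K)
  from Suc.prems have r: "r = (\<lambda>b. 0)" by auto
  have "Heq f (row (Suc K) r) (Pl (Sc 0) (Tm (Sc 0) ey))"
    unfolding r by (simp, rule hPl2, rule hTm1, rule Suc.IH, simp)
  also have "Heq f \<dots> (Sc 0)" by (rule htrans, rule hzero, rule hTm0l)
  finally show ?case .
qed

lemma row_pad: "(\<forall>b\<ge>K. r b = 0) \<Longrightarrow> K \<le> K' \<Longrightarrow> Heq f (row K' r) (row K r)"
proof (induction K' arbitrary: K r)
  case 0
  then show ?case by simp
next
  case (Suc K')
  show ?case
  proof (cases K)
    case 0
    have "\<forall>b. r b = 0" using Suc.prems 0 by simp
    then show ?thesis unfolding 0 row.simps(1) by (rule row_zero)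
  next
    case (Suc K0)
    then show ?thesis using Suc.prems
      by (simp, intro hPl2 hTm1 Suc.IH) auto
  qed
qed

lemma row_add: "Heq f (Pl (row K r) (row K s)) (row K (\<lambda>b. r b + s b))"
proof (induction K arbitrary: r s)
  case 0
  then show ?case by (simp add: hzero)
next
  case (Suc K)
  have "Heq f (Pl (row (Suc K) r) (row (Suc K) s))
     (Pl (Pl (pev (r 0)) (pev (s 0))) (Pl (Tm (row K (\<lambda>k. r (Suc k))) ey) (Tm (row K (\<lambda>k. s (Suc k))) ey)))"
    by (simp add: hPl4)
  also have "Heq f \<dots> (Pl (pev (r 0 + s 0)) (Tm (row K (\<lambda>k. r (Suc k) + s (Suc k))) ey))"
    by (rule hPl, rule pev_add, rule htrans, rule hsym, rule hdr, rule hTm1, rule Suc.IH)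
  finally show ?case by simp
qed

lemma row_pev: "Heq f (Tm (pev q) (row K r)) (row K (\<lambda>b. q * r b))"
proof (induction K arbitrary: r)
  case 0
  then show ?case by (simp add: hTm0r)
next
  case (Suc K)
  have "Heq f (Tm (pev q) (row (Suc K) r))
      (Pl (Tm (pev q) (pev (r 0))) (Tm (Tm (pev q) (row K (\<lambda>k. r (Suc k)))) ey))"
    by (simp, rule htrans, rule hdl, rule hPl2, rule hsym, rule hmassoc)
  also have "Heq f \<dots> (Pl (pev (q * r 0)) (Tm (row K (\<lambda>k. q * r (Suc k))) ey))"
    by (rule hPl, rule pev_mult, rule hTm1, rule Suc.IH)
  finally show ?case by simp
qed

lemma ey_row: "Heq f (Tm ey (row K r)) (Tm (row K (\<lambda>b. pcompose (r b) f)) ey)"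
proof (induction K arbitrary: r)
  case 0
  then show ?case by (simp, meson hTm0l hTm0r hsym htrans)
next
  case (Suc K)
  have "Heq f (Tm ey (row (Suc K) r))
      (Pl (Tm ey (pev (r 0))) (Tm (Tm ey (row K (\<lambda>k. r (Suc k)))) ey))"
    by (simp, rule htrans, rule hdl, rule hPl2, rule hsym, rule hmassoc)
  also have "Heq f \<dots> (Pl (Tm (pev (pcompose (r 0) f)) ey) (Tm (Tm (row K (\<lambda>k. pcompose (r (Suc k)) f)) ey) ey))"
    by (rule hPl, rule ey_pev, rule hTm1, rule Suc.IH)
  also have "Heq f \<dots> (Tm (row (Suc K) (\<lambda>b. pcompose (r b) f)) ey)"
    by (simp, rule hsym, rule hdr)
  finally show ?case .
qed

lemma row_shift: "Heq f (row (Suc K) (\<lambda>b. if b = 0 then 0 else r (b - 1))) (Tm (row K r) ey)"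
  by (simp add: hzero)

lemma nfx_zero: "(\<forall>a b. v a b = 0) \<Longrightarrow> Heq f (nfx K N v) (Sc 0)"
proof (induction N arbitrary: v)
  case 0
  then show ?case by simp
next
  case (Suc N)
  have "Heq f (nfx K (Suc N) v) (Pl (Sc 0) (Tm ex (Sc 0)))"
    using Suc.prems by (simp, intro hPl row_zero hTm2 Suc.IH) auto
  also have "Heq f \<dots> (Sc 0)" by (rule htrans, rule hzero, rule hTm0r)
  finally show ?case .
qed

lemma nfx_pad: "bounded K N v \<Longrightarrow> K \<le> K' \<Longrightarrow> N \<le> N' \<Longrightarrow> Heq f (nfx K' N' v) (nfx K N v)"
proof (induction N' arbitrary: N v)
  case 0
  then show ?case by simp
next
  case (Suc N')
  show ?case
  proof (cases N)
    case 0
    then have "\<forall>a b. v a b = 0" using Suc.prems by (simp add: bounded_def)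
    then show ?thesis unfolding 0 nfx.simps(1) by (rule nfx_zero)
  next
    case (Suc N0)
    then show ?thesis using Suc.prems
      by (simp, intro hPl row_pad hTm2 Suc.IH) (auto simp: bounded_def)
  qed
qed

lemma nfx_add: "Heq f (Pl (nfx K N u) (nfx K N v)) (nfx K N (u + v))"
proof (induction N arbitrary: u v)
  case 0
  then show ?case by (simp add: hzero)
next
  case (Suc N)
  have "Heq f (Pl (nfx K (Suc N) u) (nfx K (Suc N) v))
     (Pl (Pl (row K (u 0)) (row K (v 0))) (Pl (Tm ex (nfx K N (\<lambda>a. u (Suc a)))) (Tm ex (nfx K N (\<lambda>a. v (Suc a))))))"
    by (simp add: hPl4)
  also have "Heq f \<dots> (Pl (row K (\<lambda>b. u 0 b + v 0 b)) (Tm ex (nfx K N ((\<lambda>a. u (Suc a)) + (\<lambda>a. v (Suc a))))))"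
    by (rule hPl, rule row_add, rule htrans, rule hsym, rule hdl, rule hTm2, rule Suc.IH)
  finally show ?case by (simp add: plus_fun_def)
qed

lemma pev_nfx: "Heq f (Tm (pev q) (nfx K N v)) (nfx K N (Pqv f q v))"
proof (induction N arbitrary: q v)
  case 0
  then show ?case by (simp add: hTm0r)
next
  case (Suc N)
  have "Heq f (Tm (pev q) (nfx K (Suc N) v))
     (Pl (Tm (pev q) (row K (v 0))) (Tm (Tm (pev q) ex) (nfx K N (\<lambda>a. v (Suc a)))))"
    by (simp, rule htrans, rule hdl, rule hPl2, rule hsym, rule hmassoc)
  also have "Heq f \<dots> (Pl (row K (\<lambda>b. q * v 0 b)) (Tm (Tm ex (pev (pcompose q f))) (nfx K N (\<lambda>a. v (Suc a)))))"
    by (rule hPl, rule row_pev, rule hTm1, rule pev_ex)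
  also have "Heq f \<dots> (Pl (row K (\<lambda>b. q * v 0 b)) (Tm ex (nfx K N (Pqv f (pcompose q f) (\<lambda>a. v (Suc a))))))"
    by (rule hPl2, rule htrans, rule hmassoc, rule hTm2, rule Suc.IH)
  also have "\<dots> = nfx K (Suc N) (Pqv f q v)"
    by (simp add: Pqv_def pcompose_assoc)
  finally show ?case .
qed

lemma ex_nfx: "Heq f (Tm ex (nfx K N v)) (nfx K (Suc N) (Xv v))"
proof -
  have "Heq f (Tm ex (nfx K N v)) (Pl (row K (\<lambda>b. 0)) (Tm ex (nfx K N v)))"
    by (rule hsym, rule htrans, rule hPl1, rule row_zero, simp, rule hzero)
  also have "\<dots> = nfx K (Suc N) (Xv v)" by (simp add: Xv_def)
  finally show ?thesis .
qed

lemma yx_rel: "Heq f (Tm ey ex) (Pl (Tm ex ey) (pev (f - [:0,1:])))"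
proof -
  let ?a = "Tm ey ex" and ?b = "Tm ex ey"
  have "Heq f ?a (Pl ?a (Sc 0))" by (rule hsym, rule hzero_r)
  also have "Heq f \<dots> (Pl ?a (Pl (Ng ?b) ?b))" by (rule hPl2, rule hsym, rule htrans, rule hcomm, rule Heq.add_neg)
  also have "Heq f \<dots> (Pl (Mn ?a ?b) ?b)" unfolding Mn_def by (rule hsym, rule hassoc)
  also have "Heq f \<dots> (Pl (Mn (peval f eh) eh) ?b)" by (rule hPl1, rule Heq.rel_comm)
  also have "Heq f \<dots> (Pl (Mn (pev f) (pev [:0,1:])) ?b)"
    unfolding Mn_def Ng_def by (rule hPl1, rule hPl, rule peval_pev, rule hTm2, rule hsym, rule pev_X)
  also have "Heq f \<dots> (Pl (pev (f - [:0,1:])) ?b)" by (rule hPl1, rule pev_diff)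
  also have "Heq f \<dots> (Pl ?b (pev (f - [:0,1:])))" by (rule hcomm)
  finally show ?thesis .
qed

lemma ey_nfx: "bounded K N v \<Longrightarrow> Heq f (Tm ey (nfx K N v)) (nfx (Suc K) N (Yv f v))"
proof (induction N arbitrary: v)
  case 0
  then show ?case by (simp add: hTm0r)
next
  case (Suc N)
  let ?g = "f - [:0,1:]"
  define v' where "v' = (\<lambda>a. v (Suc a))"
  have bv': "bounded K N v'" using Suc.prems by (auto simp: bounded_def v'_def)
  let ?R = "row K (v 0)" and ?rest = "nfx K N v'"
  let ?A = "nfx (Suc K) N (Yv f v')"
  let ?B = "nfx (Suc K) N (\<lambda>a. Pqv f ?g v' (Suc a))"
  let ?R1 = "row (Suc K) (\<lambda>b. if b = 0 then 0 else pcompose (v 0 (b - 1)) f)"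
  let ?R2 = "row (Suc K) (Pqv f ?g v' 0)"
  have bP: "bounded K N (Pqv f ?g v')" using bv' by (simp add: bounded_def Pqv_def)
  have "Heq f (Tm ey (nfx K (Suc N) v)) (Pl (Tm ey ?R) (Tm (Tm ey ex) ?rest))"
    by (simp add: v'_def, rule htrans, rule hdl, rule hPl2, rule hsym, rule hmassoc)
  also have "Heq f \<dots> (Pl (Tm ey ?R) (Tm (Pl (Tm ex ey) (pev ?g)) ?rest))"
    by (rule hPl2, rule hTm1, rule yx_rel)
  also have "Heq f \<dots> (Pl (Tm ey ?R) (Pl (Tm ex (Tm ey ?rest)) (Tm (pev ?g) ?rest)))"
    by (rule hPl2, rule htrans, rule hdr, rule hPl1, rule hmassoc)
  also have "Heq f \<dots> (Pl ?R1 (Pl (Tm ex ?A) (nfx K N (Pqv f ?g v'))))"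
  proof (rule hPl)
    show "Heq f (Tm ey ?R) ?R1"
      by (rule htrans, rule ey_row, rule hsym, rule row_shift)
    show "Heq f (Pl (Tm ex (Tm ey ?rest)) (Tm (pev ?g) ?rest)) (Pl (Tm ex ?A) (nfx K N (Pqv f ?g v')))"
      by (rule hPl, rule hTm2, rule Suc.IH, rule bv', rule pev_nfx)
  qed
  also have "Heq f \<dots> (Pl ?R1 (Pl (Tm ex ?A) (Pl ?R2 (Tm ex ?B))))"
  proof (rule hPl2, rule hPl2)
    have "Heq f (nfx K N (Pqv f ?g v')) (nfx (Suc K) (Suc N) (Pqv f ?g v'))"
      by (rule hsym, rule nfx_pad, rule bP, simp_all)
    then show "Heq f (nfx K N (Pqv f ?g v')) (Pl ?R2 (Tm ex ?B))" by simp
  qed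
  also have "Heq f \<dots> (Pl (Pl ?R1 ?R2) (Pl (Tm ex ?A) (Tm ex ?B)))" by (rule hPl4')
  also have "Heq f \<dots> (Pl (row (Suc K) (\<lambda>b. (if b = 0 then 0 else pcompose (v 0 (b - 1)) f) + Pqv f ?g v' 0 b))
        (Tm ex (nfx (Suc K) N (Yv f v' + (\<lambda>a. Pqv f ?g v' (Suc a))))))"
    by (rule hPl, rule row_add, rule htrans, rule hsym, rule hdl, rule hTm2, rule nfx_add)
  also have "\<dots> = nfx (Suc K) (Suc N) (Yv f v)"
  proof -
    have e1: "(\<lambda>b. (if b = 0 then 0 else pcompose (v 0 (b - 1)) f) + Pqv f ?g v' 0 b) = Yv f v 0"
      by (simp add: fun_eq_iff Yv_def Pqv_def v'_def pcompose_diff pcomp_X)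
    have e2: "Yv f v' + (\<lambda>a. Pqv f ?g v' (Suc a)) = (\<lambda>a. Yv f v (Suc a))"
      by (simp add: fun_eq_iff Yv_def Pqv_def v'_def pcompose_diff pcomp_X algebra_simps del: fi.simps)
           (simp add: fi_Suc')
    show ?thesis by (simp only: e1 e2 nfx.simps)
  qed
  finally show ?case .
qed

end


lemma bX: "bounded K N v \<Longrightarrow> bounded K (Suc N) (Xv v)"
  by (auto simp: bounded_def Xv_def)
lemma bY: "bounded K N v \<Longrightarrow> bounded (Suc K) N (Yv f v)"
  by (auto simp: bounded_def Yv_def)
lemma bP: "bounded K N v \<Longrightarrow> bounded K N (Pqv f q v)"
  by (auto simp: bounded_def Pqv_def)
lemma bsc: "bounded K N v \<Longrightarrow> bounded K N (vsc c v)"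
  by (auto simp: bounded_def vsc_def)
lemma bmono: "bounded K N v \<Longrightarrow> K \<le> K' \<Longrightarrow> N \<le> N' \<Longrightarrow> bounded K' N' v"
  by (auto simp: bounded_def)
lemma badd: "bounded K N u \<Longrightarrow> bounded K N v \<Longrightarrow> bounded K N (u + v)"
  by (auto simp: bounded_def)

lemma Pqv_const: "Pqv f [:c:] v = vsc c v"
  by (simp add: Pqv_def vsc_def fun_eq_iff)

lemma readback_gen: "bounded K N v \<Longrightarrow>
  \<exists>K' N'. bounded K' N' (app (L f e) v) \<and> Heq f (Tm e (nfx K N v)) (nfx K' N' (app (L f e) v))"
proof (induction e arbitrary: K N v)
  case (Gen g)
  show ?case
  proof (cases g)
    case GX
    then show ?thesis using bX[OF Gen] ex_nfx[of f K N v] by (auto simp: app_XO simp del: nfx.simps)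
  next
    case GY
    then show ?thesis using bY[OF Gen, of f] ey_nfx[OF Gen, of f] by (auto simp: app_YO simp del: nfx.simps)
  next
    case GH
    have "Heq f (Tm eh (nfx K N v)) (nfx K N (Pqv f [:0,1:] v))"
      by (rule htrans, rule hTm1, rule hsym, rule pev_X, rule pev_nfx)
    then show ?thesis using GH bP[OF Gen, of f "[:0,1:]"] by (simp add: app_PQ) blast
  qed
next
  case (Sc c)
  have "Heq f (Tm (Sc c) (nfx K N v)) (nfx K N (Pqv f [:c:] v))"
    by (rule htrans, rule hTm1, rule hsym, rule pev_const, rule pev_nfx)
  then show ?case using bsc[OF Sc, of c] by (simp add: app_sc Pqv_const) blast
next
  case (Pl a b)
  obtain K1 N1 where 1: "bounded K1 N1 (app (L f a) v)" "Heq f (Tm a (nfx K N v)) (nfx K1 N1 (app (L f a) v))"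
    using Pl.IH(1)[OF Pl.prems] by blast
  obtain K2 N2 where 2: "bounded K2 N2 (app (L f b) v)" "Heq f (Tm b (nfx K N v)) (nfx K2 N2 (app (L f b) v))"
    using Pl.IH(2)[OF Pl.prems] by blast
  let ?K = "max K1 K2" and ?N = "max N1 N2"
  have b1: "bounded ?K ?N (app (L f a) v)" by (rule bmono[OF 1(1)]) auto
  have b2: "bounded ?K ?N (app (L f b) v)" by (rule bmono[OF 2(1)]) auto
  have "Heq f (Tm (Pl a b) (nfx K N v)) (Pl (Tm a (nfx K N v)) (Tm b (nfx K N v)))" by (rule hdr)
  also have "Heq f \<dots> (Pl (nfx ?K ?N (app (L f a) v)) (nfx ?K ?N (app (L f b) v)))"
    by (rule hPl; rule htrans, rule 1(2) 2(2), rule hsym, rule nfx_pad, (fact | simp)+)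
  also have "Heq f \<dots> (nfx ?K ?N (app (L f (Pl a b)) v))" by (simp add: nfx_add)
  finally show ?case using badd[OF b1 b2] by (simp only: L.simps app_plus) blast
next
  case (Tm a b)
  obtain K1 N1 where 1: "bounded K1 N1 (app (L f b) v)" "Heq f (Tm b (nfx K N v)) (nfx K1 N1 (app (L f b) v))"
    using Tm.IH(2)[OF Tm.prems] by blast
  obtain K2 N2 where 2: "bounded K2 N2 (app (L f a) (app (L f b) v))"
    "Heq f (Tm a (nfx K1 N1 (app (L f b) v))) (nfx K2 N2 (app (L f a) (app (L f b) v)))"
    using Tm.IH(1)[OF 1(1)] by blast
  have "Heq f (Tm (Tm a b) (nfx K N v)) (Tm a (Tm b (nfx K N v)))" by (rule hmassoc)
  also have "Heq f \<dots> (Tm a (nfx K1 N1 (app (L f b) v)))" by (rule hTm2, rule 1(2))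
  also have "Heq f \<dots> (nfx K2 N2 (app (L f a) (app (L f b) v)))" by (rule 2(2))
  finally show ?case using 2(1) by auto
qed

definition delta :: V where "delta = (\<lambda>a b. if a = 0 \<and> b = 0 then 1 else 0)"

lemma nfx_delta: "Heq f (nfx 1 1 delta) (Sc 1)"
proof -
  have "nfx 1 1 delta = Pl (Pl (pev 1) (Tm (Sc 0) ey)) (Tm ex (Sc 0))" by (simp add: delta_def)
  moreover have "Heq f (Pl (Pl (pev 1) (Tm (Sc 0) ey)) (Tm ex (Sc 0))) (Pl (Pl (Sc 1) (Sc 0)) (Sc 0))"
    using pev_const[of f 1] by (intro hPl hTm0l hTm0r) (simp_all add: one_pCons)
  moreover have "Heq f (Pl (Pl (Sc 1) (Sc 0)) (Sc 0)) (Sc 1)"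
    by (rule htrans, rule hzero_r, rule hzero_r)
  ultimately show ?thesis by (metis htrans)
qed

lemma readback: "\<exists>K N. bounded K N (app (L f e) delta) \<and> Heq f e (nfx K N (app (L f e) delta))"
proof -
  have "bounded 1 1 delta" by (simp add: bounded_def delta_def)
  from readback_gen[OF this, of f e] obtain K N where
    "bounded K N (app (L f e) delta)" "Heq f (Tm e (nfx 1 1 delta)) (nfx K N (app (L f e) delta))" by blast
  moreover have "Heq f e (Tm e (nfx 1 1 delta))"
    by (rule hsym, rule htrans, rule hTm2, rule nfx_delta, rule hone_r)
  ultimately show ?thesis by (meson htrans)
qed

lemma faithful: "L f a = L f b \<Longrightarrow> Heq f a b"
proof -
  assume eq: "L f a = L f b"
  obtain K1 N1 where 1: "bounded K1 N1 (app (L f a) delta)" "Heq f a (nfx K1 N1 (app (L f a) delta))"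
    using readback by blast
  obtain K2 N2 where 2: "bounded K2 N2 (app (L f b) delta)" "Heq f b (nfx K2 N2 (app (L f b) delta))"
    using readback by blast
  let ?K = "max K1 K2" and ?N = "max N1 N2"
  have "Heq f a (nfx ?K ?N (app (L f a) delta))"
    by (rule htrans, rule 1(2), rule hsym, rule nfx_pad, rule 1(1), simp_all)
  moreover have "Heq f b (nfx ?K ?N (app (L f a) delta))" unfolding eq
    by (rule htrans, rule 2(2), rule hsym, rule nfx_pad, rule 2(1), simp_all)
  ultimately show ?thesis by (meson hsym htrans)
qed

lemma Heq_iff: "Heq f a b \<longleftrightarrow> L f a = L f b"
  using F1 faithful by blast


definition cen :: "complex poly \<Rightarrow> lop \<Rightarrow> bool" where
  "cen f A \<longleftrightarrow> A * XO = XO * A \<and> A * YO f = YO f * A \<and> A * HO f = HO f * A"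

lemma cen_all: "cen f A \<Longrightarrow> A * L f b = L f b * A"
proof (induction b)
  case (Gen g) then show ?case by (cases g) (auto simp: cen_def)
next
  case (Sc c) then show ?case by (simp add: sc_comm)
next
  case (Pl a b) then show ?case by (simp add: algebra_simps)
next
  case (Tm a b)
  have a: "A * L f a = L f a * A" and b: "A * L f b = L f b * A" using Tm by blast+
  have "A * L f (Tm a b) = (A * L f a) * L f b" by (simp add: mult.assoc)
  also have "\<dots> = L f a * (A * L f b)" by (simp only: a mult.assoc)
  also have "\<dots> = L f (Tm a b) * A" by (simp add: b mult.assoc)
  finally show ?case .
qed

lemma center_char: "center_H f = {e. cen f (L f e)}"
proof -
  have "e \<in> center_H f \<longleftrightarrow> cen f (L f e)" for e
  proof
    assume "e \<in> center_H f"
    then have "\<forall>b. L f e * L f b = L f b * L f e" by (auto simp: center_H_def Heq_iff)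
    then show "cen f (L f e)" unfolding cen_def by (metis L.simps(1,2,3))
  next
    assume "cen f (L f e)"
    then show "e \<in> center_H f" by (simp add: center_H_def Heq_iff cen_all)
  qed
  then show ?thesis by blast
qed

lemma gen_subalg_char: "gen_subalg f S = {e. \<exists>p\<in>subalg_expr S. L f e = L f p}"
  by (auto simp: gen_subalg_def Heq_iff)

lemma cen_add: "cen f A \<Longrightarrow> cen f B \<Longrightarrow> cen f (A + B)"
  by (simp add: cen_def algebra_simps)
lemma cen_diff: "cen f A \<Longrightarrow> cen f B \<Longrightarrow> cen f (A - B)"
  by (simp add: cen_def algebra_simps)
lemma cen_mult: "cen f A \<Longrightarrow> cen f B \<Longrightarrow> cen f (A * B)"
  by (simp add: cen_def mult.assoc) (metis mult.assoc)
lemma cen_sc: "cen f (sc c)" by (simp add: cen_def sc_comm)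
lemma cen_pow: "cen f A \<Longrightarrow> cen f (A ^ n)"
  by (induction n) (simp_all add: cen_mult, simp add: cen_def)

lemma cen_subalg: "p \<in> subalg_expr S \<Longrightarrow> (\<And>s. s \<in> S \<Longrightarrow> cen f (L f s)) \<Longrightarrow> cen f (L f p)"
  by (induction rule: subalg_expr.induct) (auto simp: cen_sc cen_add cen_mult)

abbreviation ZO :: "complex poly \<Rightarrow> lop" where "ZO f \<equiv> XO * YO f - HO f"

lemma L_ez: "L f ez = ZO f" by (simp add: ez_def)

lemma cen_Z: "cen f (ZO f)"
proof -
  have YX: "YO f * XO = XO * YO f + PQ f f - HO f" using Y_X[of f] by (simp add: PQ_diff)
  have HX: "HO f * XO = XO * PQ f f" by (rule H_X)
  have YH: "YO f * HO f = PQ f f * YO f" by (rule Y_H)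
  have 1: "ZO f * XO = XO * ZO f"
  proof -
    have "ZO f * XO = XO * (YO f * XO) - HO f * XO" by (simp add: algebra_simps)
    also have "\<dots> = XO * (XO * YO f) - XO * HO f" by (simp add: YX HX algebra_simps)
    finally show ?thesis by (simp add: algebra_simps)
  qed
  have 2: "ZO f * YO f = YO f * ZO f"
  proof -
    have "YO f * ZO f = (YO f * XO) * YO f - YO f * HO f" by (simp add: algebra_simps)
    also have "\<dots> = XO * YO f * YO f - HO f * YO f" by (simp add: YX YH algebra_simps)
    finally show ?thesis by (simp add: algebra_simps)
  qed
  have 3: "ZO f * HO f = HO f * ZO f"
  proof -
    have "ZO f * HO f = XO * (YO f * HO f) - HO f * HO f" by (simp add: algebra_simps)
    also have "\<dots> = (HO f * XO) * YO f - HO f * HO f" by (simp add: YH HX algebra_simps)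
    finally show ?thesis by (simp add: algebra_simps)
  qed
  show ?thesis using 1 2 3 by (simp add: cen_def)
qed

lemma PQ_Xpow: "PQ f q * XO ^ n = XO ^ n * PQ f (pcompose q (fi f n))"
proof (induction n arbitrary: q)
  case 0 then show ?case by simp
next
  case (Suc n)
  have "PQ f q * XO ^ Suc n = (PQ f q * XO) * XO ^ n" by (simp add: mult.assoc)
  also have "\<dots> = XO * (PQ f (pcompose q f) * XO ^ n)" by (simp add: PQ_X mult.assoc)
  also have "\<dots> = XO ^ Suc n * PQ f (pcompose q (fi f (Suc n)))"
    by (simp add: Suc.IH mult.assoc pcompose_assoc)
  finally show ?case .
qed

lemma fiS: "pcompose (fi f n) f = fi f (Suc n)" by (simp only: fi_Suc')
lemma fiS2: "pcompose (pcompose q f) (fi f n) = pcompose q (fi f (Suc n))" by (simp add: pcompose_assoc)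
lemma fiS3: "(f - [:0,1:]) + (fi f (Suc (Suc n)) - f) = fi f (Suc (Suc n)) - [:0,1:]"
  by (metis add.commute diff_add_cancel add_diff_eq)

lemma Ypow_PQ: "YO f ^ n * PQ f q = PQ f (pcompose q (fi f n)) * YO f ^ n"
proof (induction n arbitrary: q)
  case 0 then show ?case by simp
next
  case (Suc n)
  have "YO f ^ Suc n * PQ f q = YO f ^ n * (YO f * PQ f q)" by (simp only: power_Suc2 mult.assoc)
  also have "\<dots> = (YO f ^ n * PQ f (pcompose q f)) * YO f" by (simp only: Y_PQ mult.assoc)
  also have "\<dots> = PQ f (pcompose q (fi f (Suc n))) * YO f ^ Suc n"
    by (simp only: Suc.IH mult.assoc power_Suc2 fiS2)
  finally show ?case .
qed

lemma Y_Xpow: "YO f * XO ^ Suc n = XO ^ Suc n * YO f + XO ^ n * PQ f (fi f (Suc n) - [:0,1:])"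
proof (induction n)
  case 0 then show ?case by (simp add: Y_X)
next
  case (Suc n)
  let ?X = XO and ?Y = "YO f"
  have "?Y * ?X ^ Suc (Suc n) = (?Y * ?X ^ Suc n) * ?X" by (simp only: mult.assoc power_Suc2[of XO "Suc n"])
  also have "\<dots> = ?X ^ Suc n * (?Y * ?X) + ?X ^ n * (PQ f (fi f (Suc n) - [:0,1:]) * ?X)"
    by (simp only: Suc.IH distrib_right mult.assoc)
  also have "\<dots> = ?X ^ Suc n * (?X * ?Y + PQ f (f - [:0,1:])) + ?X ^ n * (?X * PQ f (pcompose (fi f (Suc n) - [:0,1:]) f))"
    by (simp only: Y_X PQ_X)
  also have "\<dots> = (?X ^ Suc n * ?X) * ?Y + ?X ^ Suc n * PQ f (f - [:0,1:]) + (?X ^ n * ?X) * PQ f (fi f (Suc (Suc n)) - f)"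
    by (simp only: distrib_left mult.assoc pcompose_diff pcomp_X fiS)
  also have "\<dots> = ?X ^ Suc (Suc n) * ?Y + ?X ^ Suc n * (PQ f (f - [:0,1:]) + PQ f (fi f (Suc (Suc n)) - f))"
    by (simp only: power_Suc2[symmetric] distrib_left add.assoc)
  also have "\<dots> = ?X ^ Suc (Suc n) * ?Y + ?X ^ Suc n * PQ f (fi f (Suc (Suc n)) - [:0,1:])"
    by (simp only: PQ_add[symmetric] fiS3)
  finally show ?case .
qed

lemma Ypow_X: "YO f ^ Suc n * XO = XO * YO f ^ Suc n + PQ f (fi f (Suc n) - [:0,1:]) * YO f ^ n"
proof (induction n)
  case 0 then show ?case by (simp add: Y_X)
next
  case (Suc n)
  let ?X = XO and ?Y = "YO f"
  have "?Y ^ Suc (Suc n) * ?X = ?Y * (?Y ^ Suc n * ?X)" by (simp only: mult.assoc power_Suc)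
  also have "\<dots> = (?Y * ?X) * ?Y ^ Suc n + (?Y * PQ f (fi f (Suc n) - [:0,1:])) * ?Y ^ n"
    by (simp only: Suc.IH distrib_left mult.assoc)
  also have "\<dots> = (?X * ?Y + PQ f (f - [:0,1:])) * ?Y ^ Suc n + (PQ f (pcompose (fi f (Suc n) - [:0,1:]) f) * ?Y) * ?Y ^ n"
    by (simp only: Y_X Y_PQ)
  also have "\<dots> = ?X * (?Y * ?Y ^ Suc n) + PQ f (f - [:0,1:]) * ?Y ^ Suc n + PQ f (fi f (Suc (Suc n)) - f) * (?Y * ?Y ^ n)"
    by (simp only: distrib_right mult.assoc pcompose_diff pcomp_X fiS)
  also have "\<dots> = ?X * ?Y ^ Suc (Suc n) + (PQ f (f - [:0,1:]) + PQ f (fi f (Suc (Suc n)) - f)) * ?Y ^ Suc n"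
    by (simp only: power_Suc[symmetric] distrib_right add.assoc)
  also have "\<dots> = ?X * ?Y ^ Suc (Suc n) + PQ f (fi f (Suc (Suc n)) - [:0,1:]) * ?Y ^ Suc n"
    by (simp only: PQ_add[symmetric] fiS3)
  finally show ?case .
qed


definition Rxv :: "complex poly \<Rightarrow> V \<Rightarrow> V" where
  "Rxv f v = (\<lambda>a b. (if a = 0 then 0 else pcompose (v (a - 1) b) f) + v a (Suc b) * (fi f (Suc b) - [:0,1:]))"
definition Ryv :: "V \<Rightarrow> V" where
  "Ryv v = (\<lambda>a b. if b = 0 then 0 else v a (b - 1))"
definition Rhv :: "complex poly \<Rightarrow> V \<Rightarrow> V" where
  "Rhv f v = (\<lambda>a b. v a b * fi f b)"

lemma Rx_add: "Rxv f (u + v) = Rxv f u + Rxv f v"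
  by (simp add: Rxv_def fun_eq_iff pcompose_add algebra_simps)
lemma Ry_add: "Ryv (u + v) = Ryv u + Ryv v"
  by (simp add: Ryv_def fun_eq_iff)
lemma Rh_add: "Rhv f (u + v) = Rhv f u + Rhv f v"
  by (simp add: Rhv_def fun_eq_iff algebra_simps)

lemma Rx_X: "Rxv f (Xv v) = Xv (Rxv f v)"
  by (simp add: Rxv_def Xv_def fun_eq_iff)
lemma fi1: "fi f (Suc 0) = f" by simp

lemma Rx_P: "Rxv f (Pqv f q v) = Pqv f q (Rxv f v)"
proof -
  have "Rxv f (Pqv f q v) a b = Pqv f q (Rxv f v) a b" for a b
    by (cases a) (simp_all add: Rxv_def Pqv_def pcompose_mult pcompose_assoc[symmetric] fiS algebra_simps
        del: fi.simps)
  then show ?thesis by (simp add: fun_eq_iff)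
qed
lemma Rx_sc: "Rxv f (vsc c v) = vsc c (Rxv f v)"
  by (simp add: Rxv_def vsc_def fun_eq_iff pcompose_smult smult_add_right)

lemma ring_aux: "(Z + (F1 - g) * B) + (B + (F1 - x) * C) * (F2 - x) =
   (Z + B * (F2 - g)) + (F1 - x) * (B + C * (F2 - x))" for Z F1 F2 g B C x :: "'a::comm_ring"
  by (simp add: algebra_simps)

lemma Rx_Y: "Rxv f (Yv f v) = Yv f (Rxv f v)"
proof -
  have "Rxv f (Yv f v) a b = Yv f (Rxv f v) a b" for a b
  proof -
    let ?Z = "if a = 0 \<or> b = 0 then 0 else pcompose (pcompose (v (a - 1) (b - 1)) f) f"
    let ?B = "pcompose (v a b) f" and ?C = "v (Suc a) (Suc b)" and ?X = "[:0,1:] :: complex poly"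
    have y1: "Yv f v a (Suc b) = ?B + (fi f (Suc a) - ?X) * ?C" by (simp add: Yv_def del: fi.simps)
    have r1: "Rxv f v (Suc a) b = ?B + ?C * (fi f (Suc b) - ?X)" by (simp add: Rxv_def del: fi.simps)
    have y0: "(if a = 0 then 0 else pcompose (Yv f v (a - 1) b) f) = ?Z + (fi f (Suc a) - f) * ?B"
    proof (cases a)
      case 0 then show ?thesis by simp
    next
      case (Suc n)
      then show ?thesis
        by (simp add: Yv_def pcompose_add pcompose_mult pcompose_diff pcomp_X fiS del: fi.simps)
    qed
    have r0: "(if b = 0 then 0 else pcompose (Rxv f v a (b - 1)) f) = ?Z + ?B * (fi f (Suc b) - f)"
    proof (cases b)
      case 0 then show ?thesis by simp
    next
      case (Suc n)
      then show ?thesis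
        by (simp add: Rxv_def pcompose_add pcompose_mult pcompose_diff pcomp_X fiS del: fi.simps)
    qed
    have "Rxv f (Yv f v) a b = (if a = 0 then 0 else pcompose (Yv f v (a - 1) b) f) + Yv f v a (Suc b) * (fi f (Suc b) - ?X)"
      by (simp add: Rxv_def del: fi.simps)
    also have "\<dots> = (?Z + (fi f (Suc a) - f) * ?B) + (?B + (fi f (Suc a) - ?X) * ?C) * (fi f (Suc b) - ?X)"
      by (simp only: y0 y1)
    also have "\<dots> = (?Z + ?B * (fi f (Suc b) - f)) + (fi f (Suc a) - ?X) * (?B + ?C * (fi f (Suc b) - ?X))"
      by (rule ring_aux)
    also have "\<dots> = (if b = 0 then 0 else pcompose (Rxv f v a (b - 1)) f) + (fi f (Suc a) - ?X) * Rxv f v (Suc a) b"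
      by (simp only: r0 r1)
    also have "\<dots> = Yv f (Rxv f v) a b" by (simp add: Yv_def del: fi.simps)
    finally show ?thesis .
  qed
  then show ?thesis by (simp add: fun_eq_iff)
qed

lemma Ry_X: "Ryv (Xv v) = Xv (Ryv v)" by (simp add: Ryv_def Xv_def fun_eq_iff)
lemma Ry_P: "Ryv (Pqv f q v) = Pqv f q (Ryv v)" by (simp add: Ryv_def Pqv_def fun_eq_iff)
lemma Ry_sc: "Ryv (vsc c v) = vsc c (Ryv v)" by (simp add: Ryv_def vsc_def fun_eq_iff)
lemma Ry_Y: "Ryv (Yv f v) = Yv f (Ryv v)" by (simp add: Ryv_def Yv_def fun_eq_iff)

lemma Rh_X: "Rhv f (Xv v) = Xv (Rhv f v)" by (simp add: Rhv_def Xv_def fun_eq_iff)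
lemma Rh_P: "Rhv f (Pqv f q v) = Pqv f q (Rhv f v)" by (simp add: Rhv_def Pqv_def fun_eq_iff algebra_simps)
lemma Rh_sc: "Rhv f (vsc c v) = vsc c (Rhv f v)" by (simp add: Rhv_def vsc_def fun_eq_iff)
lemma Rh_Y: "Rhv f (Yv f v) = Yv f (Rhv f v)"
proof -
  have "Rhv f (Yv f v) a b = Yv f (Rhv f v) a b" for a b
    by (cases b) (simp_all add: Rhv_def Yv_def pcompose_mult fiS distrib_right mult.assoc del: fi.simps)
  then show ?thesis by (simp add: fun_eq_iff)
qed

lemma L_Rx: "app (L f e) (Rxv f v) = Rxv f (app (L f e) v)"
proof (induction e arbitrary: v)
  case (Gen g) then show ?case by (cases g) (simp_all add: app_XO app_YO app_PQ Rx_X Rx_Y Rx_P)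
qed (simp_all add: app_sc Rx_sc Rx_add)

lemma L_Ry: "app (L f e) (Ryv v) = Ryv (app (L f e) v)"
proof (induction e arbitrary: v)
  case (Gen g) then show ?case by (cases g) (simp_all add: app_XO app_YO app_PQ Ry_X Ry_Y Ry_P)
qed (simp_all add: app_sc Ry_sc Ry_add)

lemma L_Rh: "app (L f e) (Rhv f v) = Rhv f (app (L f e) v)"
proof (induction e arbitrary: v)
  case (Gen g) then show ?case by (cases g) (simp_all add: app_XO app_YO app_PQ Rh_X Rh_Y Rh_P)
qed (simp_all add: app_sc Rh_sc Rh_add)

definition vec :: "complex poly \<Rightarrow> fexpr \<Rightarrow> V" where "vec f e = app (L f e) delta"

lemma Xd: "Xv delta = Rxv f delta" by (simp add: Xv_def Rxv_def delta_def fun_eq_iff pcompose_1)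
lemma Yd: "Yv f delta = Ryv delta" by (simp add: Yv_def Ryv_def delta_def fun_eq_iff pcompose_1)
lemma Hd: "Pqv f [:0,1:] delta = Rhv f delta" by (simp add: Pqv_def Rhv_def delta_def fun_eq_iff)

lemma cen_vec:
  assumes "cen f (L f e)"
  shows "Xv (vec f e) = Rxv f (vec f e)" "Yv f (vec f e) = Ryv (vec f e)"
        "Pqv f [:0,1:] (vec f e) = Rhv f (vec f e)"
proof -
  from assms have c: "L f e * XO = XO * L f e" "L f e * YO f = YO f * L f e" "L f e * HO f = HO f * L f e"
    by (auto simp: cen_def)
  have "Xv (vec f e) = app (XO * L f e) delta" by (simp add: vec_def app_XO)
  also have "\<dots> = app (L f e * XO) delta" by (simp only: c)
  also have "\<dots> = Rxv f (vec f e)" by (simp add: app_XO Xd[of f] L_Rx vec_def)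
  finally show "Xv (vec f e) = Rxv f (vec f e)" .
  have "Yv f (vec f e) = app (YO f * L f e) delta" by (simp add: vec_def app_YO)
  also have "\<dots> = app (L f e * YO f) delta" by (simp only: c)
  also have "\<dots> = Ryv (vec f e)" by (simp add: app_YO Yd[of f] L_Ry vec_def)
  finally show "Yv f (vec f e) = Ryv (vec f e)" .
  have "Pqv f [:0,1:] (vec f e) = app (HO f * L f e) delta" by (simp add: vec_def app_PQ)
  also have "\<dots> = app (L f e * HO f) delta" by (simp only: c)
  also have "\<dots> = Rhv f (vec f e)" by (simp add: app_PQ Hd[of f] L_Rh vec_def)
  finally show "Pqv f [:0,1:] (vec f e) = Rhv f (vec f e)" .
qed

lemma vec_inj: "vec f a = vec f b \<Longrightarrow> L f a = L f b"
proof -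
  assume eq: "vec f a = vec f b"
  obtain K1 N1 where 1: "bounded K1 N1 (app (L f a) delta)" "Heq f a (nfx K1 N1 (app (L f a) delta))"
    using readback by blast
  obtain K2 N2 where 2: "bounded K2 N2 (app (L f b) delta)" "Heq f b (nfx K2 N2 (app (L f b) delta))"
    using readback by blast
  let ?K = "max K1 K2" and ?N = "max N1 N2"
  have "Heq f a (nfx ?K ?N (app (L f a) delta))"
    by (rule htrans, rule 1(2), rule hsym, rule nfx_pad, rule 1(1), simp_all)
  moreover have "Heq f b (nfx ?K ?N (app (L f b) delta))"
    by (rule htrans, rule 2(2), rule hsym, rule nfx_pad, rule 2(1), simp_all)
  moreover have "app (L f b) delta = app (L f a) delta" using eq by (simp add: vec_def)
  ultimately have "Heq f a b" by (metis hsym htrans)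
  then show ?thesis by (rule F1)
qed

definition tb :: "nat \<Rightarrow> V \<Rightarrow> bool" where
  "tb T v \<longleftrightarrow> (\<forall>a b. T < a + b \<longrightarrow> v a b = 0)"

lemma vec_tb: "\<exists>T. tb T (vec f e)"
proof -
  obtain K N where "bounded K N (vec f e)" using readback unfolding vec_def by blast
  then have "tb (K + N) (vec f e)" unfolding bounded_def tb_def
  proof (intro allI impI)
    fix a b assume h: "\<forall>a b. N \<le> a \<or> K \<le> b \<longrightarrow> vec f e a b = 0" "K + N < a + b"
    then have "N \<le> a \<or> K \<le> b" by arith
    then show "vec f e a b = 0" using h by blast
  qed
  then show ?thesis by blast
qed


definition sing :: "nat \<Rightarrow> nat \<Rightarrow> complex poly \<Rightarrow> V" where
  "sing a0 b0 p = (\<lambda>a b. if a = a0 \<and> b = b0 then p else 0)"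

definition top :: "nat \<Rightarrow> nat \<Rightarrow> complex poly \<Rightarrow> V \<Rightarrow> bool" where
  "top T a0 p w \<longleftrightarrow> a0 \<le> T \<and> tb T w \<and> (\<forall>a b. a + b = T \<longrightarrow> w a b = (if a = a0 then p else 0))"

lemma top_sing: "top (a0 + b0) a0 p (sing a0 b0 p)"
  by (auto simp: top_def tb_def sing_def)

lemma Z_top:
  assumes t: "top T a0 p w" and pf: "pcompose p f = p"
  shows "top (T + 2) (Suc a0) p (app (ZO f) w)"
proof -
  have tw: "w a b = 0" if "T < a + b" for a b using t that by (auto simp: top_def tb_def)
  have Zw: "app (ZO f) w a b = (if a = 0 then 0 else (if b = 0 then 0 else pcompose (w (a - 1) (b - 1)) f)
        + (fi f a - [:0,1:]) * w a b) - fi f a * w a b" for a b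
    by (cases a) (simp_all add: app_XO app_YO app_PQ Xv_def Yv_def Pqv_def pcomp_X)
  have "tb (T + 2) (app (ZO f) w)"
    unfolding tb_def
  proof (intro allI impI)
    fix a b assume "T + 2 < a + b"
    then show "app (ZO f) w a b = 0" by (simp only: Zw) (simp add: tw)
  qed
  moreover have "app (ZO f) w a b = (if a = Suc a0 then p else 0)" if "a + b = T + 2" for a b
  proof -
    have wab: "w a b = 0" using that by (simp add: tw)
    show ?thesis
    proof (cases "a = 0 \<or> b = 0")
      case True
      have "a \<noteq> Suc a0"
      proof
        assume "a = Suc a0"
        then show False using True that t by (auto simp: top_def)
      qed
      then show ?thesis using True by (simp only: Zw) (auto simp: wab)
    next
      case False
      then have "(a - 1) + (b - 1) = T" using that by auto
      then have "w (a - 1) (b - 1) = (if a - 1 = a0 then p else 0)" using t by (auto simp: top_def)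
      then show ?thesis using False by (simp only: Zw) (auto simp: wab pf)
    qed
  qed
  moreover have "Suc a0 \<le> T + 2" using t by (simp add: top_def)
  ultimately show ?thesis by (simp add: top_def)
qed

lemma Zpow_top: "top T a0 p w \<Longrightarrow> pcompose p f = p \<Longrightarrow> top (T + 2 * n) (a0 + n) p (app (ZO f ^ n) w)"
proof (induction n)
  case 0 then show ?case by simp
next
  case (Suc n)
  have "top (T + 2 * n + 2) (Suc (a0 + n)) p (app (ZO f) (app (ZO f ^ n) w))"
    using Z_top[OF Suc.IH[OF Suc.prems] Suc.prems(2)] .
  moreover have "T + 2 * Suc n = T + 2 * n + 2" "a0 + Suc n = Suc (a0 + n)" by simp_all
  ultimately show ?case by (simp only: power_Suc app_times)
qed

lemma app_Xpow: "app (XO ^ m) w = (\<lambda>a b. if m \<le> a then w (a - m) b else 0)"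
proof (induction m)
  case 0 then show ?case by (simp add: fun_eq_iff)
next
  case (Suc m)
  have "app (XO ^ Suc m) w = Xv (app (XO ^ m) w)" by (simp add: app_XO)
  then show ?case by (auto simp: Suc.IH Xv_def fun_eq_iff Suc_le_eq)
qed

lemma app_Xpow_sing: "app (XO ^ m) (sing a0 b0 p) = sing (a0 + m) b0 p"
  by (auto simp: app_Xpow sing_def fun_eq_iff)

lemma app_Y_sing: "app (YO f) (sing 0 j p) = sing 0 (Suc j) (pcompose p f)"
  by (auto simp: app_YO Yv_def sing_def fun_eq_iff)

lemma app_Ypow_sing: "pcompose p f = p \<Longrightarrow> app (YO f ^ m) (sing 0 0 p) = sing 0 m p"
  by (induction m) (simp_all add: app_Y_sing)

lemma app_PQ_delta: "app (PQ f p) delta = sing 0 0 p"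
  by (auto simp: app_PQ Pqv_def delta_def sing_def fun_eq_iff)

lemma app_sc_delta: "app (sc c) delta = sing 0 0 [:c:]"
  by (auto simp: app_sc vsc_def delta_def sing_def fun_eq_iff)

lemma epow_sub: "e \<in> subalg_expr S \<Longrightarrow> epow e n \<in> subalg_expr S"
  by (induction n) (auto intro: subalg_expr.intros)

lemma peel_aux:
  assumes H: "\<And>e T i. cen f (L f e) \<Longrightarrow> tb T (vec f e) \<Longrightarrow> i \<le> T \<Longrightarrow> vec f e i (T - i) \<noteq> 0 \<Longrightarrow>
     \<exists>M\<in>subalg_expr S. cen f (L f M) \<and> top T i (vec f e i (T - i)) (vec f M)"
  shows "\<forall>e. cen f (L f e) \<longrightarrow> tb T (vec f e) \<longrightarrow> card {i. i \<le> T \<and> vec f e i (T - i) \<noteq> 0} = n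
     \<longrightarrow> (\<exists>p\<in>subalg_expr S. L f e = L f p)"
proof (induction T arbitrary: n rule: less_induct)
  case (less T)
  show ?case
  proof (induction n)
    case 0
    show ?case
    proof (intro allI impI)
      fix e assume ce: "cen f (L f e)" and tT: "tb T (vec f e)"
        and c0: "card {i. i \<le> T \<and> vec f e i (T - i) \<noteq> 0} = 0"
      have fin: "finite {i. i \<le> T \<and> vec f e i (T - i) \<noteq> 0}" by simp
      have z: "vec f e i (T - i) = 0" if "i \<le> T" for i using c0 fin that by auto
      show "\<exists>p\<in>subalg_expr S. L f e = L f p"
      proof (cases T)
        case 0
        have "vec f e = vec f (Sc 0)"
        proof (intro ext)
          fix a b
          show "vec f e a b = vec f (Sc 0) a b"
          proof (cases "a + b = 0")
            case True then show ?thesis using z[of 0] 0 by (simp add: vec_def app_sc vsc_def)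
          next
            case False
            have h: "vec f e a b = 0" using tT False 0 unfolding tb_def by auto
            show ?thesis by (simp add: h, simp add: vec_def app_sc vsc_def)
          qed
        qed
        then show ?thesis using vec_inj by (blast intro: subalg_expr.scal)
      next
        case (Suc T')
        have "tb T' (vec f e)" unfolding tb_def
        proof (intro allI impI)
          fix a b assume "T' < a + b"
          then consider "T < a + b" | "a + b = T" using Suc by linarith
          then show "vec f e a b = 0"
          proof cases
            case 1 then show ?thesis using tT by (simp add: tb_def)
          next
            case 2 then show ?thesis using z[of a] by (metis add_diff_cancel_left' le_add1)
          qed
        qed
        then show ?thesis using less.IH[of T'] Suc ce by blast
      qed
    qed
  next
    case (Suc m)
    show ?case
    proof (intro allI impI)
      fix e assume ce: "cen f (L f e)" and tT: "tb T (vec f e)"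
        and cS: "card {i. i \<le> T \<and> vec f e i (T - i) \<noteq> 0} = Suc m"
      obtain i where i: "i \<le> T" "vec f e i (T - i) \<noteq> 0"
        using cS by (metis (mono_tags, lifting) card_eq_0_iff empty_Collect_eq nat.distinct(1))
      obtain M where M: "M \<in> subalg_expr S" "cen f (L f M)" "top T i (vec f e i (T - i)) (vec f M)"
        using H[OF ce tT i] by blast
      let ?e' = "Mn e M"
      have ve': "vec f ?e' = vec f e - vec f M" by (simp add: vec_def)
      have ce': "cen f (L f ?e')" using ce M(2) by (simp add: cen_diff)
      have tM: "tb T (vec f M)" using M(3) by (simp add: top_def)
      have tT': "tb T (vec f ?e')" using tT tM by (simp add: ve' tb_def)
      have Mv: "vec f M j (T - j) = (if j = i then vec f e i (T - i) else 0)" if "j \<le> T" for j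
        using M(3) that by (simp add: top_def)
      have "{j. j \<le> T \<and> vec f ?e' j (T - j) \<noteq> 0} = {j. j \<le> T \<and> vec f e j (T - j) \<noteq> 0} - {i}"
        using Mv by (auto simp: ve' split: if_splits)
      then have "card {j. j \<le> T \<and> vec f ?e' j (T - j) \<noteq> 0} = m" using cS i by simp
      then obtain p where p: "p \<in> subalg_expr S" "L f ?e' = L f p" using Suc.IH ce' tT' by blast
      have "L f e = L f (Pl p M)" using p(2) by (simp add: algebra_simps)
      moreover have "Pl p M \<in> subalg_expr S" using p(1) M(1) by (rule subalg_expr.plus)
      ultimately show "\<exists>p\<in>subalg_expr S. L f e = L f p" by blast
    qed
  qed
qed

lemma peel:
  assumes H: "\<And>e T i. cen f (L f e) \<Longrightarrow> tb T (vec f e) \<Longrightarrow> i \<le> T \<Longrightarrow> vec f e i (T - i) \<noteq> 0 \<Longrightarrow>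
     \<exists>M\<in>subalg_expr S. cen f (L f M) \<and> top T i (vec f e i (T - i)) (vec f M)"
    and ce: "cen f (L f e)"
  shows "\<exists>p\<in>subalg_expr S. L f e = L f p"
proof -
  obtain T where "tb T (vec f e)" using vec_tb by blast
  then show ?thesis using peel_aux[OF H] ce by blast
qed


definition NR :: "complex poly \<Rightarrow> bool" where
  "NR f \<longleftrightarrow> \<not> (\<exists>c w l. primitive_root w l \<and> f = [:(1 - w) * c, w:])"

lemma prim_exists:
  fixes a :: complex
  assumes "a ^ k = 1" "0 < k"
  shows "\<exists>l. primitive_root a l"
proof -
  let ?l = "LEAST n. 0 < n \<and> a ^ n = 1"
  have h: "0 < ?l \<and> a ^ ?l = 1" using assms by (metis (mono_tags, lifting) LeastI)
  have "\<forall>k. 0 < k \<and> k < ?l \<longrightarrow> a ^ k \<noteq> 1" using not_less_Least by blast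
  then show ?thesis using h unfolding primitive_root_def by blast
qed

lemma NR_lin:
  assumes "NR f" "f = [:b, a:]"
  shows "(a = 1 \<longrightarrow> b \<noteq> 0) \<and> (a \<noteq> 1 \<longrightarrow> (\<forall>k>0. a ^ k \<noteq> 1))"
proof (intro conjI impI allI)
  assume a: "a = 1"
  show "b \<noteq> 0"
  proof
    assume "b = 0"
    then have "primitive_root 1 1 \<and> f = [:(1 - 1) * 0, 1:]" using assms a by (auto simp: primitive_root_def)
    then show False using assms(1) unfolding NR_def by blast
  qed
next
  fix k :: nat assume a: "a \<noteq> 1" and k: "0 < k"
  show "a ^ k \<noteq> 1"
  proof
    assume "a ^ k = 1"
    then obtain l where l: "primitive_root a l" using prim_exists k by blast
    have "f = [:(1 - a) * (b / (1 - a)), a:]" using assms(2) a by simp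
    then show False using assms(1) l unfolding NR_def by blast
  qed
qed

lemma deg0_const: "degree (p :: complex poly) = 0 \<Longrightarrow> p = [:coeff p 0:]"
  by (metis degree_eq_zeroE coeff_pCons_0)

lemma deg1_lin: "degree (p :: complex poly) = 1 \<Longrightarrow> p = [:coeff p 0, coeff p 1:]"
  by (auto simp: poly_eq_iff coeff_pCons coeff_eq_0 split: nat.split)

lemma fi_lin: "fi [:b, a:] k = [:b * (\<Sum>j<k. a ^ j), a ^ k:]"
proof (induction k)
  case 0 then show ?case by simp
next
  case (Suc k)
  have "(\<Sum>j<Suc k. a ^ j) = 1 + a * (\<Sum>j<k. a ^ j)"
    by (simp only: sum.lessThan_Suc_shift power_0 power_Suc sum_distrib_left)
  then show ?case by (simp add: Suc.IH pcompose_pCons algebra_simps)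
qed

lemma degree_fi: "degree (fi f k) = degree f ^ k"
  by (induction k) (simp_all add: degree_pcompose)

lemma G0:
  assumes "NR f" "0 < k"
  shows "fi f k \<noteq> [:0, 1:]"
proof -
  obtain n where k: "k = Suc n" using assms(2) by (cases k) auto
  consider "degree f = 0" | "degree f = 1" | "degree f \<ge> 2" by linarith
  then show ?thesis
  proof cases
    case 1
    then have "fi f k = [:coeff f 0:]" unfolding k by (subst deg0_const[OF 1], simp)
    then show ?thesis by simp
  next
    case 2
    let ?b = "coeff f 0" and ?a = "coeff f 1"
    have f: "f = [:?b, ?a:]" by (rule deg1_lin[OF 2])
    have c: "(?a = 1 \<longrightarrow> ?b \<noteq> 0) \<and> (?a \<noteq> 1 \<longrightarrow> (\<forall>k>0. ?a ^ k \<noteq> 1))" by (rule NR_lin[OF assms(1) f])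
    have fk: "fi f k = [:?b * (\<Sum>j<k. ?a ^ j), ?a ^ k:]" by (subst f, rule fi_lin)
    show ?thesis
    proof (cases "?a = 1")
      case True
      then have "fi f k = [:?b * of_nat k, 1:]" using fk by simp
      then show ?thesis using c True assms(2) by simp
    next
      case False
      then show ?thesis using fk c assms(2) by simp
    qed
  next
    case 3
    have "degree f \<le> degree f ^ k" using 3 assms(2) by (simp add: self_le_power)
    then have "degree (fi f k) \<ge> 2" using 3 by (simp add: degree_fi)
    then show ?thesis by auto
  qed
qed

lemma G2:
  assumes "NR f" "pcompose p f = p"
  shows "degree p = 0"
proof (rule ccontr)
  assume dp: "degree p \<noteq> 0"
  consider "degree f = 0" | "degree f = 1" | "degree f \<ge> 2" by linarith
  then show False
  proof cases
    case 1
    have "pcompose p f = [:poly p (coeff f 0):]" by (subst deg0_const[OF 1], rule pcompose_pCons_0)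
    then show False using assms(2) dp by (metis degree_pCons_0)
  next
    case 2
    let ?b = "coeff f 0" and ?a = "coeff f 1"
    have f: "f = [:?b, ?a:]" by (rule deg1_lin[OF 2])
    have c: "(?a = 1 \<longrightarrow> ?b \<noteq> 0) \<and> (?a \<noteq> 1 \<longrightarrow> (\<forall>k>0. ?a ^ k \<noteq> 1))" by (rule NR_lin[OF assms(1) f])
    have "lead_coeff (pcompose p f) = lead_coeff p * lead_coeff f ^ degree p"
      by (rule lead_coeff_comp) (simp add: 2)
    then have "lead_coeff p * ?a ^ degree p = lead_coeff p" using assms(2) 2 by simp
    moreover have "lead_coeff p \<noteq> 0" using dp by auto
    ultimately have ak: "?a ^ degree p = 1" by simp
    show False
    proof (cases "?a = 1")
      case False
      then show False using c ak dp by auto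
    next
      case True
      then have b: "?b \<noteq> 0" using c by simp
      have sh: "poly p (x + ?b) = poly p x" for x
      proof -
        have "poly (pcompose p f) x = poly p x" using assms(2) by simp
        moreover have a1: "coeff f (Suc 0) = 1" using True by simp
        ultimately show ?thesis by (subst (asm) f) (simp add: poly_pcompose a1 add.commute)
      qed
      have nb: "poly p (of_nat n * ?b) = poly p 0" for n
        by (induction n) (simp_all add: algebra_simps, metis sh add.commute)
      let ?q = "p - [:poly p 0:]"
      have "?q \<noteq> 0" using dp by (metis degree_pCons_0 eq_iff_diff_eq_0)
      then have fin: "finite {x. poly ?q x = 0}" by (rule poly_roots_finite)
      have "range (\<lambda>n::nat. of_nat n * ?b) \<subseteq> {x. poly ?q x = 0}" using nb by auto
      moreover have "inj (\<lambda>n::nat. of_nat n * ?b)" using b by (auto simp: inj_def)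
      then have "infinite (range (\<lambda>n::nat. of_nat n * ?b))" by (simp add: range_inj_infinite)
      ultimately show False using fin finite_subset by blast
    qed
  next
    case 3
    have "degree (pcompose p f) = degree p * degree f" by (rule degree_pcompose)
    then have "degree p * degree f = degree p" by (simp only: assms(2))
    then have "degree f = 1" using dp by auto
    then show False using 3 by simp
  qed
qed


lemma cen_conds:
  assumes "cen f (L f e)"
  shows "vec f e a b = pcompose (vec f e a b) f + vec f e (Suc a) (Suc b) * (fi f (Suc b) - [:0,1:])"
    and "vec f e 0 (Suc b) * (fi f (Suc b) - [:0,1:]) = 0"
    and "(fi f (Suc a) - [:0,1:]) * vec f e (Suc a) 0 = 0"
    and "fi f a * vec f e a b = vec f e a b * fi f b"
proof -
  note c = cen_vec[OF assms]
  have "Xv (vec f e) (Suc a) b = Rxv f (vec f e) (Suc a) b" using c(1) by simp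
  then show "vec f e a b = pcompose (vec f e a b) f + vec f e (Suc a) (Suc b) * (fi f (Suc b) - [:0,1:])"
    by (simp add: Xv_def Rxv_def del: fi.simps)
  have "Xv (vec f e) 0 b = Rxv f (vec f e) 0 b" using c(1) by simp
  then show "vec f e 0 (Suc b) * (fi f (Suc b) - [:0,1:]) = 0"
    by (simp add: Xv_def Rxv_def del: fi.simps)
  have "Yv f (vec f e) a 0 = Ryv (vec f e) a 0" using c(2) by simp
  then show "(fi f (Suc a) - [:0,1:]) * vec f e (Suc a) 0 = 0"
    by (simp add: Yv_def Ryv_def del: fi.simps)
  have "Pqv f [:0,1:] (vec f e) a b = Rhv f (vec f e) a b" using c(3) by simp
  then show "fi f a * vec f e a b = vec f e a b * fi f b"
    by (simp add: Pqv_def Rhv_def pcomp_X del: fi.simps)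
qed

lemma generic_hyp:
  assumes nr: "NR f" and ce: "cen f (L f e)" and tT: "tb T (vec f e)" and i: "i \<le> T"
    and nz: "vec f e i (T - i) \<noteq> 0"
  shows "\<exists>M\<in>subalg_expr {ez}. cen f (L f M) \<and> top T i (vec f e i (T - i)) (vec f M)"
proof -
  let ?v = "vec f e"
  note cc = cen_conds[OF ce]
  have nzf: "fi f (Suc b) - [:0,1:] \<noteq> 0" for b using G0[OF nr, of "Suc b"] by simp
  have off: "\<forall>d. ?v m (m + Suc d) = 0 \<and> ?v (m + Suc d) m = 0" for m
  proof (induction m)
    case 0
    show ?case using cc(2) cc(3) nzf by (simp add: mult_eq_0_iff del: fi.simps)
  next
    case (Suc m)
    show ?case
    proof
      fix d
      have a: "?v m (m + Suc d) = 0" "?v (m + Suc d) m = 0" using Suc.IH by auto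
      have "?v (Suc m) (Suc (m + Suc d)) = 0" using cc(1)[of m "m + Suc d"] a(1) nzf by (simp del: fi.simps)
      moreover have "?v (Suc (m + Suc d)) (Suc m) = 0" using cc(1)[of "m + Suc d" m] a(2) nzf by (simp del: fi.simps)
      ultimately show "?v (Suc m) (Suc m + Suc d) = 0 \<and> ?v (Suc m + Suc d) (Suc m) = 0" by simp
    qed
  qed
  have iT: "T - i = i"
  proof (rule ccontr)
    assume ne: "T - i \<noteq> i"
    define j where "j = T - i"
    have nzj: "?v i j \<noteq> 0" using nz by (simp add: j_def)
    show False
    proof (cases "i < j")
      case True
      have "j = i + Suc (j - i - 1)" using True by simp
      then obtain d where hd: "j = i + Suc d" by blast
      have "?v i (i + Suc d) = 0" using off[of i] by blast
      then show False using nzj hd by simp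
    next
      case False
      then have "j < i" using ne by (simp add: j_def)
      then have "i = j + Suc (i - j - 1)" by simp
      then obtain d where hd: "i = j + Suc d" by blast
      have "?v (j + Suc d) j = 0" using off[of j] by blast
      then show False using nzj hd by simp
    qed
  qed
  let ?p = "?v i i"
  have T2: "T = i + i" using iT i by simp
  have "?v (Suc i) (Suc i) = 0" using tT T2 by (simp add: tb_def)
  then have pf: "pcompose ?p f = ?p" using cc(1)[of i i] by simp
  have "degree ?p = 0" by (rule G2[OF nr pf])
  then have pc: "?p = [:coeff ?p 0:]" by (rule deg0_const)
  let ?c = "coeff ?p 0"
  let ?M = "Tm (epow ez i) (Sc ?c)"
  have Msub: "?M \<in> subalg_expr {ez}" by (intro subalg_expr.times epow_sub subalg_expr.base subalg_expr.scal) simp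
  have Mcen: "cen f (L f ?M)" by (simp add: L_ez cen_mult cen_pow cen_Z cen_sc)
  have "vec f ?M = app (ZO f ^ i) (sing 0 0 [:?c:])" by (simp only: vec_def L.simps L_epow L_ez app_times app_sc_delta)
  moreover have "top (0 + 0 + 2 * i) (0 + i) [:?c:] (app (ZO f ^ i) (sing 0 0 [:?c:]))"
    by (rule Zpow_top[OF top_sing]) simp
  ultimately have "top T i (vec f e i (T - i)) (vec f ?M)" using T2 iT pc by (simp add: mult_2)
  then show ?thesis using Msub Mcen by blast
qed

theorem generic_case: "NR f \<Longrightarrow> center_H f = gen_subalg f {ez}"
proof -
  assume nr: "NR f"
  have cz: "\<And>s. s \<in> {ez} \<Longrightarrow> cen f (L f s)" by (simp add: L_ez cen_Z)
  show ?thesis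
  proof (intro set_eqI iffI)
    fix e assume "e \<in> center_H f"
    then have ce: "cen f (L f e)" by (simp add: center_char)
    have "\<exists>p\<in>subalg_expr {ez}. L f e = L f p"
      by (rule peel[OF generic_hyp[OF nr] ce])
    then show "e \<in> gen_subalg f {ez}" by (simp add: gen_subalg_char)
  next
    fix e assume "e \<in> gen_subalg f {ez}"
    then obtain p where "p \<in> subalg_expr {ez}" and "L f e = L f p" by (auto simp: gen_subalg_char)
    moreover have "cen f (L f p)" using cen_subalg[of p "{ez}" f] cz \<open>p \<in> subalg_expr {ez}\<close> by blast
    ultimately show "e \<in> center_H f" by (simp add: center_char)
  qed
qed


lemma pcompose_pow: "pcompose (p ^ n) q = (pcompose p q) ^ (n::nat)" for p q :: "complex poly"
  by (induction n) (simp_all add: pcompose_mult pcompose_1)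

lemma psum: "degree q < n \<Longrightarrow> (\<Sum>j<n. smult (coeff q j) (r ^ j)) = pcompose q (r :: complex poly)"
proof (induction q arbitrary: n rule: pCons_induct)
  case 0 then show ?case by simp
next
  case (pCons a q)
  obtain m where n: "n = Suc m" using pCons.prems by (cases n) auto
  have rec: "(\<Sum>j<m. smult (coeff q j) (r ^ j)) = pcompose q r"
  proof (cases "q = 0")
    case True then show ?thesis by simp
  next
    case False
    then have "degree q < m" using pCons.prems n by simp
    then show ?thesis by (rule pCons.IH)
  qed
  have "(\<Sum>j<n. smult (coeff (pCons a q) j) (r ^ j)) =
      smult (coeff (pCons a q) 0) (r ^ 0) + (\<Sum>j<m. smult (coeff (pCons a q) (Suc j)) (r ^ Suc j))"
    unfolding n by (rule sum.lessThan_Suc_shift)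
  also have "\<dots> = [:a:] + (\<Sum>j<m. smult (coeff q j) (r ^ Suc j))" by simp
  also have "\<dots> = [:a:] + r * (\<Sum>j<m. smult (coeff q j) (r ^ j))"
    by (simp only: sum_distrib_left mult_smult_right power_Suc)
  also have "\<dots> = pcompose (pCons a q) r" by (simp add: rec pcompose_pCons)
  finally show ?case .
qed

context
  fixes f :: "complex poly" and w :: complex and l :: nat and c :: complex
  assumes pr: "primitive_root w l" and fdef: "f = [:(1 - w) * c, w:]"
begin

lemma l_pos: "0 < l" and wl: "w ^ l = 1" using pr by (auto simp: primitive_root_def)

lemma w_nz: "w \<noteq> 0"
proof
  assume "w = 0"
  then have "w ^ l = 0" using l_pos by simp
  then show False using wl by simp
qed

lemma dvd_of_pow: "w ^ n = 1 \<Longrightarrow> l dvd n"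
proof -
  assume h: "w ^ n = 1"
  have "w ^ n = w ^ (l * (n div l) + n mod l)" by simp
  also have "\<dots> = (w ^ l) ^ (n div l) * w ^ (n mod l)" by (simp only: power_add power_mult)
  finally have w1: "w ^ (n mod l) = 1" using h wl by simp
  have "n mod l = 0"
  proof (rule ccontr)
    assume "n mod l \<noteq> 0"
    moreover have "n mod l < l" using l_pos by simp
    ultimately have "w ^ (n mod l) \<noteq> 1" using pr unfolding primitive_root_def by simp
    then show False using w1 by simp
  qed
  then show ?thesis by (simp add: dvd_eq_mod_eq_0)
qed

lemma dvd_of_eq: "w ^ a = w ^ b \<Longrightarrow> b \<le> a \<Longrightarrow> l dvd (a - b)"
proof -
  assume h: "w ^ a = w ^ b" "b \<le> a"
  have "w ^ a = w ^ (b + (a - b))" using h(2) by simp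
  also have "\<dots> = w ^ b * w ^ (a - b)" by (simp only: power_add)
  finally have eq: "w ^ b * w ^ (a - b) = w ^ b * 1" using h(1) by simp
  have nz: "w ^ b \<noteq> 0" using w_nz by simp
  have "w ^ (a - b) = 1" using mult_left_cancel[OF nz, THEN iffD1, OF eq] .
  then show ?thesis by (rule dvd_of_pow)
qed

lemma fi_root: "fi f n = [:(1 - w ^ n) * c, w ^ n:]"
  by (induction n) (simp_all add: fdef pcompose_pCons algebra_simps)

lemma fi_l: "fi f l = [:0, 1:]" by (simp add: fi_root wl)

lemma fi_eq: "fi f a = fi f b \<Longrightarrow> w ^ a = w ^ b" by (simp add: fi_root)

abbreviation "u \<equiv> [:- c, 1:] :: complex poly"

lemma u_f: "pcompose (u ^ l) f = u ^ l"
proof -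
  have h: "pcompose u f = smult w u" by (simp add: fdef pcompose_pCons algebra_simps)
  have "pcompose (u ^ l) f = (smult w u) ^ l" by (simp only: pcompose_pow h)
  also have "\<dots> = smult (w ^ l) (u ^ l)" by (simp only: smult_power)
  finally show ?thesis by (simp add: wl)
qed

lemma cen_Xl: "cen f (XO ^ l)"
proof -
  obtain n where n: "l = Suc n" using l_pos by (cases l) auto
  have 1: "XO ^ l * XO = XO * XO ^ l" by (simp add: power_commutes)
  have "YO f * XO ^ l = XO ^ l * YO f" using Y_Xpow[of f n] by (simp add: n[symmetric] fi_l PQ_0)
  moreover have "HO f * XO ^ l = XO ^ l * HO f" using PQ_Xpow[of f "[:0,1:]" l] by (simp add: pcomp_X fi_l)
  ultimately show ?thesis using 1 by (simp add: cen_def)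
qed

lemma cen_Yl: "cen f (YO f ^ l)"
proof -
  obtain n where n: "l = Suc n" using l_pos by (cases l) auto
  have "YO f ^ l * XO = XO * YO f ^ l" using Ypow_X[of f n] by (simp add: n[symmetric] fi_l PQ_0)
  moreover have "YO f ^ l * YO f = YO f * YO f ^ l" by (simp add: power_commutes)
  moreover have "YO f ^ l * HO f = HO f * YO f ^ l" using Ypow_PQ[of f l "[:0,1:]"] by (simp add: pcomp_X fi_l)
  ultimately show ?thesis by (simp add: cen_def)
qed

lemma L_G: "L f (Mn eh (Sc c)) = PQ f u"
proof -
  have "PQ f u = PQ f ([:0,1:] - [:c:])" by simp
  also have "\<dots> = HO f - sc c" by (simp only: PQ_diff PQ_const)
  finally show ?thesis by simp
qed

lemma L_Gl: "L f (epow (Mn eh (Sc c)) l) = PQ f (u ^ l)"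
  by (simp only: L_epow L_G PQ_pow)

lemma cen_ul: "cen f (PQ f (u ^ l))"
proof -
  have "PQ f (u ^ l) * XO = XO * PQ f (u ^ l)" using PQ_X[of f "u ^ l"] by (simp add: u_f)
  moreover have "PQ f (u ^ l) * YO f = YO f * PQ f (u ^ l)" using Y_PQ[of f "u ^ l"] by (simp add: u_f)
  moreover have "PQ f (u ^ l) * HO f = HO f * PQ f (u ^ l)" by (rule PQ_comm)
  ultimately show ?thesis by (simp add: cen_def)
qed

definition S4 where "S4 = {epow ex l, epow ey l, epow (Mn eh (Sc c)) l, ez}"

lemma cen_S4: "s \<in> S4 \<Longrightarrow> cen f (L f s)"
  unfolding S4_def
proof (elim insertE)
  assume "s = epow ex l" then show ?thesis by (simp add: cen_Xl)
next
  assume "s = epow ey l" then show ?thesis by (simp add: cen_Yl)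
next
  assume "s = epow (Mn eh (Sc c)) l" then show ?thesis by (simp only: L_Gl cen_ul)
next
  assume "s = ez" then show ?thesis by (simp add: L_ez cen_Z)
qed simp

lemma P_exists:
  assumes pf: "pcompose p f = p"
  shows "\<exists>P\<in>subalg_expr S4. L f P = PQ f p"
proof -
  let ?q = "pcompose p [:c, 1:]"
  have "pcompose ?q [:0, w:] = pcompose p (pcompose [:c,1:] [:0,w:])" by (simp add: pcompose_assoc)
  also have "pcompose [:c,1:] [:0,w:] = pcompose f [:c,1:]" by (simp add: fdef pcompose_pCons algebra_simps)
  also have "pcompose p (pcompose f [:c,1:]) = ?q" by (simp add: pcompose_assoc pf)
  finally have qw: "pcompose ?q [:0, w:] = ?q" .
  have cdvd: "l dvd j" if "coeff ?q j \<noteq> 0" for j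
  proof -
    have "w ^ j * coeff ?q j = coeff ?q j" using qw coeff_pcompose_linear[of ?q w j] by simp
    then have "w ^ j = 1" using that by simp
    then show ?thesis by (rule dvd_of_pow)
  qed
  let ?G = "Mn eh (Sc c)"
  let ?n = "Suc (degree ?q)"
  define P where "P = foldr (\<lambda>j acc. Pl (Tm (Sc (coeff ?q j)) (epow (epow ?G l) (j div l))) acc) [0..<?n] (Sc 0)"
  have sub: "foldr (\<lambda>j acc. Pl (Tm (Sc (coeff ?q j)) (epow (epow ?G l) (j div l))) acc) xs (Sc 0) \<in> subalg_expr S4" for xs
  proof (induction xs)
    case Nil then show ?case by (simp add: subalg_expr.scal)
  next
    case (Cons j xs)
    have "epow ?G l \<in> subalg_expr S4" by (rule subalg_expr.base) (simp add: S4_def)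
    then have "epow (epow ?G l) (j div l) \<in> subalg_expr S4" by (rule epow_sub)
    then show ?case using Cons by (simp add: subalg_expr.plus subalg_expr.times subalg_expr.scal)
  qed
  have Lfold: "L f (foldr (\<lambda>j acc. Pl (Tm (Sc (coeff ?q j)) (epow (epow ?G l) (j div l))) acc) xs (Sc 0))
     = PQ f (\<Sum>j\<leftarrow>xs. smult (coeff ?q j) (u ^ j))" for xs
  proof (induction xs)
    case Nil then show ?case by (simp add: sc_zero PQ_0)
  next
    case (Cons j xs)
    have Lt: "L f (epow (epow ?G l) m) = (PQ f u ^ l) ^ m" for m by (simp only: L_epow L_G)
    have "sc (coeff ?q j) * (PQ f u ^ l) ^ (j div l) = PQ f (smult (coeff ?q j) (u ^ j))"
    proof (cases "coeff ?q j = 0")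
      case True then show ?thesis by (simp add: sc_zero PQ_0)
    next
      case False
      then have "l * (j div l) = j" using cdvd by simp
      then show ?thesis by (simp add: PQ_smult PQ_pow power_mult[symmetric])
    qed
    then show ?case using Cons by (simp add: Lt PQ_add del: L_epow)
  qed
  have "(\<Sum>j\<leftarrow>[0..<?n]. smult (coeff ?q j) (u ^ j)) = (\<Sum>j<?n. smult (coeff ?q j) (u ^ j))"
    by (simp only: sum_set_upt_conv_sum_list_nat[symmetric] set_upt atLeast0LessThan)
  also have "\<dots> = pcompose ?q u" by (rule psum) simp
  also have "\<dots> = p" by (simp add: pcompose_assoc[symmetric] pcompose_pCons)
  finally have "L f P = PQ f p" by (simp only: P_def Lfold)
  moreover have "P \<in> subalg_expr S4" unfolding P_def by (rule sub)
  ultimately show ?thesis by blast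
qed

lemma root_hyp:
  assumes ce: "cen f (L f e)" and tT: "tb T (vec f e)" and i: "i \<le> T"
    and nz: "vec f e i (T - i) \<noteq> 0"
  shows "\<exists>M\<in>subalg_expr S4. cen f (L f M) \<and> top T i (vec f e i (T - i)) (vec f M)"
proof -
  let ?v = "vec f e"
  define k where "k = T - i"
  let ?p = "?v i k"
  note cc = cen_conds[OF ce]
  have Tk: "T - i = k" by (simp add: k_def)
  have "?v (Suc i) (Suc k) = 0" using tT i by (simp add: tb_def k_def)
  then have pf: "pcompose ?p f = ?p" using cc(1)[of i k] by simp
  have "(fi f i - fi f k) * ?p = 0" using cc(4)[of i k] by (simp add: algebra_simps)
  then have "fi f i = fi f k" using nz by (simp add: Tk)
  then have wik: "w ^ i = w ^ k" by (rule fi_eq)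
  obtain P where P: "P \<in> subalg_expr S4" "L f P = PQ f ?p"
    using P_exists[OF pf] by blast
  have cP: "cen f (L f P)" using cen_subalg[OF P(1) cen_S4] .
  have bS: "epow ex l \<in> subalg_expr S4" "epow ey l \<in> subalg_expr S4" "ez \<in> subalg_expr S4"
    by (auto intro: subalg_expr.base simp: S4_def)
  show ?thesis
  proof (cases "k \<le> i")
    case True
    define m where "m = i - k"
    have "l dvd m" unfolding m_def using dvd_of_eq[OF wik True] .
    then have lm: "l * (m div l) = m" by simp
    let ?M = "Tm (epow ez k) (Tm (epow (epow ex l) (m div l)) P)"
    have Msub: "?M \<in> subalg_expr S4"
      by (intro subalg_expr.times epow_sub bS P(1))
    have Mcen: "cen f (L f ?M)"
      by (simp only: L.simps L_epow L_ez) (rule cen_mult[OF cen_pow[OF cen_Z] cen_mult[OF cen_pow[OF cen_Xl] cP]])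
    have "vec f ?M = app (ZO f ^ k) (sing (0 + m) 0 ?p)"
      by (simp only: vec_def L.simps L_epow L_ez app_times P(2) app_PQ_delta power_mult[symmetric]
          lm app_Xpow_sing)
    moreover have "top (0 + m + 0 + 2 * k) (0 + m + k) ?p (app (ZO f ^ k) (sing (0 + m) 0 ?p))"
      by (rule Zpow_top[OF top_sing pf])
    moreover have "T = 0 + m + 0 + 2 * k" "i = 0 + m + k" using True i by (simp_all add: m_def k_def)
    ultimately have "top T i ?p (vec f ?M)" by simp
    then have "top T i (?v i (T - i)) (vec f ?M)" by (simp only: Tk)
    then show ?thesis using Msub Mcen by blast
  next
    case False
    define m where "m = k - i"
    have "l dvd m" unfolding m_def using dvd_of_eq[OF wik[symmetric]] False by simp
    then have lm: "l * (m div l) = m" by simp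
    let ?M = "Tm (epow ez i) (Tm (epow (epow ey l) (m div l)) P)"
    have Msub: "?M \<in> subalg_expr S4"
      by (intro subalg_expr.times epow_sub bS P(1))
    have Mcen: "cen f (L f ?M)"
      by (simp only: L.simps L_epow L_ez) (rule cen_mult[OF cen_pow[OF cen_Z] cen_mult[OF cen_pow[OF cen_Yl] cP]])
    have "vec f ?M = app (ZO f ^ i) (sing 0 m ?p)"
      by (simp only: vec_def L.simps L_epow L_ez app_times P(2) app_PQ_delta power_mult[symmetric]
          lm app_Ypow_sing[OF pf[unfolded vec_def]])
    moreover have "top (0 + m + 2 * i) (0 + i) ?p (app (ZO f ^ i) (sing 0 m ?p))"
      by (rule Zpow_top[OF top_sing pf])
    moreover have "T = 0 + m + 2 * i" "i = 0 + i" using False i by (simp_all add: m_def k_def)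
    ultimately have "top T i ?p (vec f ?M)" by simp
    then have "top T i (?v i (T - i)) (vec f ?M)" by (simp only: Tk)
    then show ?thesis using Msub Mcen by blast
  qed
qed

theorem root_case: "center_H f = gen_subalg f {epow ex l, epow ey l, epow (Mn eh (Sc c)) l, ez}"
proof (intro set_eqI iffI)
  fix e assume "e \<in> center_H f"
  then have ce: "cen f (L f e)" by (simp add: center_char)
  have "\<exists>p\<in>subalg_expr S4. L f e = L f p" by (rule peel[OF root_hyp ce])
  then show "e \<in> gen_subalg f {epow ex l, epow ey l, epow (Mn eh (Sc c)) l, ez}"
    by (simp add: gen_subalg_char S4_def)
next
  fix e assume "e \<in> gen_subalg f {epow ex l, epow ey l, epow (Mn eh (Sc c)) l, ez}"
  then obtain p where p: "p \<in> subalg_expr S4" and eq: "L f e = L f p" by (auto simp: gen_subalg_char S4_def)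
  have "cen f (L f p)" using cen_subalg[OF p cen_S4] .
  then show "e \<in> center_H f" using eq by (simp add: center_char)
qed

end


theorem theorem4:
  fixes f :: "complex poly"
  shows "(\<forall>c w l. primitive_root w l \<and> f = [:(1 - w) * c, w:] \<longrightarrow>
            center_H f = gen_subalg f {epow ex l, epow ey l, epow (Mn eh (Sc c)) l, ez})
     \<and> ((\<nexists>c w l. primitive_root w l \<and> f = [:(1 - w) * c, w:]) \<longrightarrow>
            center_H f = gen_subalg f {ez})"
proof (intro conjI allI impI)
  fix c w l assume "primitive_root w l \<and> f = [:(1 - w) * c, w:]"
  then show "center_H f = gen_subalg f {epow ex l, epow ey l, epow (Mn eh (Sc c)) l, ez}"
    using root_case by blast
next
  assume "\<nexists>c w l. primitive_root w l \<and> f = [:(1 - w) * c, w:]"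
  then have "NR f" by (simp add: NR_def)
  then show "center_H f = gen_subalg f {ez}" by (rule generic_case)
qed

end
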